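(* Let $d,d'\ge 1$, let $F:\mathbb{R}^d\to\mathbb{R}^d$, $A:\mathbb{R}^d\to\mathcal{S}^{d'}_{++}$, $b:\mathbb{R}^d\to\mathbb{R}^{d'}$, and let $Q(r,x)=\tfrac12 x^\top A(r)x-b(r)^\top x$. For a fixed final time $t_f>0$ independent of $\varepsilon$, let $(r_\star,p_\star)$ with $p_\star=\dot r_\star$ solve the exact dynamics $$\ddot r_\star=F(r_\star)-\frac{\partial Q}{\partial r}(r_\star,x_\star),\qquad 0=b(r_\star)-A(r_\star)x_\star,$$ and for $\varepsilon>0$ let $(r_\varepsilon,p_\varepsilon,x_\varepsilon,\dot x_\varepsilon)$ with $p_\varepsilon=\dot r_\varepsilon$ solve the extended Lagrangian dynamics (XLMD) $$\ddot r_\varepsilon=F(r_\varepsilon)-\frac{\partial Q}{\partial r}(r_\varepsilon,x_\varepsilon),\qquad \varepsilon\ddot x_\varepsilon=b(r_\varepsilon)-A(r_\varepsilon)x_\varepsilon,$$ on $[0,t_f]$. Assume: (i) $A$ is $C^3$ and there is $C>0$ with $A(r)\succeq C^{-1}I$ for all $r\in\mathbb{R}^d$; (ii) $b$ is $C^3$; (iii) $F$ is $C^2$; (iv) all initial values of $(r_\star,p_\star)$ and $(r_\varepsilon,p_\varepsilon,x_\varepsilon,\dot x_\varepsilon)$ are bounded independently of $\varepsilon$, and $r_\star(0)=r_\varepsilon(0)$, $p_\star(0)=p_\varepsilon(0)$; (v) both systems have unique solutions on $[0,t_f]$, the functions $r_\star,r_\varepsilon,x_\varepsilon$ are $C^3$,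 and there is a constant $C$ independent of $\varepsilon$ with $|d^kr_\star/dt^k|,|d^kr_\varepsilon/dt^k|\le C$ for $k=0,1,2$ and $|x_\varepsilon|,\sqrt{\varepsilon}|\dot x_\varepsilon|\le C$ on $[0,t_f]$. Assume moreover the initial condition for the latent variable is compatible, i.e. $x_\varepsilon(0)=A(r_\star(0))^{-1}b(r_\star(0))$ and $\dot x_\varepsilon(0)$ is bounded uniformly in $\varepsilon$. Then: (i) for general $d'$, there is a constant $C>0$ independent of $\varepsilon$ such that $|r_\varepsilon(t)-r_\star(t)|\le C\varepsilon^{1/2}$, $|p_\varepsilon(t)-p_\star(t)|\le C\varepsilon^{1/2}$ and $|x_\varepsilon(t)-x_\star(t)|\le C\varepsilon^{1/2}$ for all $t\in[0,t_f]$; (ii) if $d'=1$, then $|r_\varepsilon(t)-r_\star(t)|\le C\varepsilon$ and $|p_\varepsilon(t)-p_\star(t)|\le C\varepsilon$ for all $t\in[0,t_f]$; the bound $|x_\varepsilon(t)-x_\star(t)|\le C\varepsilon^{1/2}$ holds in general, and if the initial condition is moreover optimally compatible, i.e. additionally $$\dot x_\varepsilon(0)=-A(r_\star(0))^{-1}\Big[\sum_{k=1}^d\dot r_{\star,k}(0)\frac{\partial A}{\partial r_k}(r_\star(0))\Big]A(r_\star(0))^{-1}b(r_\star(0))+A(r_\star(0))^{-1}\Big[\sum_{k=1}^d\dot r_{\star,k}(0)\frac{\partial b}{\partial r_k}(r_\star(0))\Big],$$ then $|x_\varepsilon(t)-x_\star(t)|\le C\varepsilon$ for all $t\in[0,t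_f]$.
   Context: $\mathcal{S}^{d'}_{++}$ denotes the set of real symmetric positive definite $d'\times d'$ matrices. $\frac{\partial Q}{\partial r}(r,x)$ denotes the gradient of $Q$ in $r$, i.e. the vector with $k$-th entry $\tfrac12 x^\top\frac{\partial A}{\partial r_k}(r)x-\frac{\partial b}{\partial r_k}(r)^\top x$. The constant $C$ may depend on all problem data (including $t_f$) but not on $\varepsilon$. *)

theory Defs
  imports "HOL-Analysis.Analysis"
begin

definition C1_on :: "'a::real_normed_vector set \<Rightarrow> ('a \<Rightarrow> 'b::real_normed_vector) \<Rightarrow> bool" where
  "C1_on S f \<longleftrightarrow> (\<exists>f' :: 'a \<Rightarrow> 'a \<Rightarrow>\<^sub>L 'b.
      (\<forall>y\<in>S. (f has_derivative blinfun_apply (f' y)) (at y within S)) \<and> continuous_on S f')"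

definition C2_on :: "'a::real_normed_vector set \<Rightarrow> ('a \<Rightarrow> 'b::real_normed_vector) \<Rightarrow> bool" where
  "C2_on S f \<longleftrightarrow> (\<exists>f' :: 'a \<Rightarrow> 'a \<Rightarrow>\<^sub>L 'b.
      (\<forall>y\<in>S. (f has_derivative blinfun_apply (f' y)) (at y within S)) \<and> C1_on S f')"

definition C3_on :: "'a::real_normed_vector set \<Rightarrow> ('a \<Rightarrow> 'b::real_normed_vector) \<Rightarrow> bool" where
  "C3_on S f \<longleftrightarrow> (\<exists>f' :: 'a \<Rightarrow> 'a \<Rightarrow>\<^sub>L 'b.
      (\<forall>y\<in>S. (f has_derivative blinfun_apply (f' y)) (at y within S)) \<and> C2_on S f')"

definition partial :: "(real^'n \<Rightarrow> 'b::real_normed_vector) \<Rightarrow> real^'n \<Rightarrow> 'n \<Rightarrow> 'b" where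
  "partial f r k = frechet_derivative f (at r) (axis k 1)"

definition Qfun :: "(real^'n \<Rightarrow> real^'m^'m) \<Rightarrow> (real^'n \<Rightarrow> real^'m) \<Rightarrow> real^'n \<Rightarrow> real^'m \<Rightarrow> real" where
  "Qfun A b r x = (1/2) * (x \<bullet> (A r *v x)) - b r \<bullet> x"

definition dQdr :: "(real^'n \<Rightarrow> real^'m^'m) \<Rightarrow> (real^'n \<Rightarrow> real^'m) \<Rightarrow> real^'n \<Rightarrow> real^'m \<Rightarrow> real^'n" where
  "dQdr A b r x = (\<chi> k. (1/2) * (x \<bullet> (partial A r k *v x)) - partial b r k \<bullet> x)"

definition exact_sol :: "(real^'n \<Rightarrow> real^'n) \<Rightarrow> (real^'n \<Rightarrow> real^'m^'m) \<Rightarrow> (real^'n \<Rightarrow> real^'m)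
    \<Rightarrow> real \<Rightarrow> (real \<Rightarrow> real^'n) \<Rightarrow> (real \<Rightarrow> real^'n) \<Rightarrow> (real \<Rightarrow> real^'m) \<Rightarrow> bool" where
  "exact_sol F A b tf r p x \<longleftrightarrow> (\<forall>t\<in>{0..tf}.
      (r has_vector_derivative p t) (at t within {0..tf}) \<and>
      (p has_vector_derivative (F (r t) - dQdr A b (r t) (x t))) (at t within {0..tf}) \<and>
      b (r t) - A (r t) *v x t = 0)"

definition xlmd_sol :: "(real^'n \<Rightarrow> real^'n) \<Rightarrow> (real^'n \<Rightarrow> real^'m^'m) \<Rightarrow> (real^'n \<Rightarrow> real^'m)
    \<Rightarrow> real \<Rightarrow> real \<Rightarrow> (real \<Rightarrow> real^'n) \<Rightarrow> (real \<Rightarrow> real^'n) \<Rightarrow> (real \<Rightarrow> real^'m) \<Rightarrow> (real \<Rightarrow> real^'m) \<Rightarrow> bool" where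
  "xlmd_sol F A b tf eps r p x xd \<longleftrightarrow> (\<forall>t\<in>{0..tf}.
      (r has_vector_derivative p t) (at t within {0..tf}) \<and>
      (p has_vector_derivative (F (r t) - dQdr A b (r t) (x t))) (at t within {0..tf}) \<and>
      (x has_vector_derivative xd t) (at t within {0..tf}) \<and>
      (\<exists>xdd. (xd has_vector_derivative xdd) (at t within {0..tf}) \<and>
             eps *\<^sub>R xdd = b (r t) - A (r t) *v x t))"

end

theory Submission
  imports Defs
begin


lemma mv_norm_le:
  fixes M :: "real^'n^'m"
  shows "norm (M *v z) \<le> norm M * norm z"
proof -
  have "norm (M *v z) = L2_set (\<lambda>i. norm ((M *v z) $ i)) UNIV"
    by (simp add: norm_vec_def)
  also have "\<dots> \<le> L2_set (\<lambda>i. norm (M $ i) * norm z) UNIV"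
  proof (rule L2_set_mono)
    fix i
    have "(M *v z) $ i = M $ i \<bullet> z" by (simp add: matrix_mult_dot)
    then show "norm ((M *v z) $ i) \<le> norm (M $ i) * norm z"
      by (simp add: Cauchy_Schwarz_ineq2)
  qed simp
  also have "\<dots> = norm z * L2_set (\<lambda>i. norm (M $ i)) UNIV"
    by (subst L2_set_right_distrib) (auto simp: mult.commute)
  also have "\<dots> = norm M * norm z"
    by (simp add: norm_vec_def[of M])
  finally show ?thesis .
qed

lemma bounded_bilinear_mv: "bounded_bilinear (\<lambda>(M::real^'n^'m) z. M *v z)"
proof
  fix a a' :: "real^'n^'m" and b b' :: "real^'n" and r :: real
  show "(a + a') *v b = a *v b + a' *v b" by (simp add: matrix_vector_mult_add_rdistrib)
  show "a *v (b + b') = a *v b + a *v b'" by (simp add: matrix_vector_right_distrib)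
  show "(r *\<^sub>R a) *v b = r *\<^sub>R (a *v b)"
    by (simp add: vec_eq_iff matrix_vector_mult_def sum_distrib_left algebra_simps)
  show "a *v (r *\<^sub>R b) = r *\<^sub>R (a *v b)"
    by (simp add: vec_eq_iff matrix_vector_mult_def sum_distrib_left algebra_simps)
next
  show "\<exists>K. \<forall>(a::real^'n^'m) (b::real^'n). norm (a *v b) \<le> norm a * norm b * K"
    apply (rule exI[of _ 1]) apply (intro allI) apply (simp only: mult_1_right) by (rule mv_norm_le)
qed

lemma vd_mv:
  fixes M :: "real \<Rightarrow> real^'n^'m"
  assumes "(M has_vector_derivative M') (at t within S)" "(z has_vector_derivative z') (at t within S)"
  shows "((\<lambda>t. M t *v z t) has_vector_derivative (M t *v z' + M' *v z t)) (at t within S)"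
  using bounded_bilinear.has_vector_derivative[OF bounded_bilinear_mv assms] by simp

lemma vd_inner:
  fixes u :: "real \<Rightarrow> 'a::real_inner"
  assumes "(u has_vector_derivative u') (at t within S)" "(z has_vector_derivative z') (at t within S)"
  shows "((\<lambda>t. u t \<bullet> z t) has_real_derivative (u t \<bullet> z' + u' \<bullet> z t)) (at t within S)"
  using bounded_bilinear.has_vector_derivative[OF bounded_bilinear_inner assms]
  by (simp add: has_real_derivative_iff_has_vector_derivative)

lemma vd_blin:
  fixes f :: "real \<Rightarrow> 'a::real_normed_vector \<Rightarrow>\<^sub>L 'b::real_normed_vector"
  assumes "(f has_vector_derivative f') (at t within S)" "(z has_vector_derivative z') (at t within S)"
  shows "((\<lambda>t. f t (z t)) has_vector_derivative (f t z' + f' (z t))) (at t within S)"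
  using bounded_bilinear.has_vector_derivative[OF bounded_bilinear_blinfun_apply assms] by simp

lemma vd_chain:
  assumes "\<And>y. (f has_derivative blinfun_apply (f' y)) (at y)"
    and "(r has_vector_derivative p) (at t within S)"
  shows "((\<lambda>t. f (r t)) has_vector_derivative f' (r t) p) (at t within S)"
proof -
  have "(f has_derivative blinfun_apply (f' (r t))) (at (r t) within r ` S)"
    using assms(1) has_derivative_at_withinI by blast
  from diff_chain_within[OF assms(2)[unfolded has_vector_derivative_def] this]
  show ?thesis unfolding has_vector_derivative_def o_def
    by (simp add: blinfun.scaleR_right)
qed

lemma vd_vec_lambda:
  fixes f :: "real \<Rightarrow> 'k::finite \<Rightarrow> real"
  assumes "\<And>k. ((\<lambda>t. f t k) has_real_derivative f' k) (at t within S)"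
  shows "((\<lambda>t. \<chi> k. f t k) has_vector_derivative (\<chi> k. f' k)) (at t within S)"
  unfolding has_vector_derivative_def
proof (subst has_derivative_componentwise_within, intro ballI)
  fix i :: "real^'k" assume "i \<in> Basis"
  then obtain k where k: "i = axis k 1" by (auto simp: Basis_vec_def)
  have "((\<lambda>t. f t k) has_derivative (\<lambda>h. h * f' k)) (at t within S)"
    using assms[of k] unfolding has_field_derivative_def
    by (rule has_derivative_eq_rhs) (auto simp: mult.commute)
  then show "((\<lambda>x. (\<chi> k. f x k) \<bullet> i) has_derivative (\<lambda>x. x *\<^sub>R (\<chi> k. f' k) \<bullet> i)) (at t within S)"
    unfolding k by (simp add: inner_axis)
qed

lemma mv_scaleR_left: "((r::real) *\<^sub>R (M::real^'n^'m)) *v z = r *\<^sub>R (M *v z)"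
  by (simp add: vec_eq_iff matrix_vector_mult_def sum_distrib_left algebra_simps)
lemma mv_scaleR_right: "(M::real^'n^'m) *v ((r::real) *\<^sub>R z) = r *\<^sub>R (M *v z)"
  by (simp add: vec_eq_iff matrix_vector_mult_def sum_distrib_left algebra_simps)

lemma norm3: "norm (a - b - c) \<le> norm a + norm b + norm (c::'a::real_normed_vector)"
  by (smt (verit) norm_triangle_ineq4)

lemma vd_solve:
  fixes M :: "real \<Rightarrow> real^'m^'m" and y c :: "real \<Rightarrow> real^'m"
  assumes eq: "\<forall>s\<in>S. M s *v y s = c s" and t: "t \<in> S"
    and coer: "\<forall>s\<in>S. \<forall>u. norm u \<le> K * norm (M s *v u)"
    and dM: "(M has_vector_derivative M') (at t within S)"
    and dc: "(c has_vector_derivative c') (at t within S)"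
    and u: "M t *v u = c' - M' *v y t"
  shows "(y has_vector_derivative u) (at t within S)"
proof -
  have K0: "K \<ge> 0"
  proof (rule ccontr)
    assume "\<not> K \<ge> 0"
    then have "K * norm (M t *v axis undefined 1) \<le> 0" by (simp add: mult_nonpos_nonneg)
    moreover have "norm (axis undefined 1 :: real^'m) \<le> K * norm (M t *v axis undefined 1)"
      using coer t by blast
    ultimately show False by simp
  qed
  have Mc: "(M \<longlongrightarrow> M t) (at t within S)"
    using has_vector_derivative_continuous[OF dM] by (simp add: continuous_within)
  have cc: "(c \<longlongrightarrow> c t) (at t within S)"
    using has_vector_derivative_continuous[OF dc] by (simp add: continuous_within)
  have ev: "\<forall>\<^sub>F s in at t within S. s \<in> S" by (simp add: eventually_at_filter)
  have key1: "M s *v (y s - y t) = c s - c t - (M s - M t) *v y t" if "s \<in> S" for s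
    using eq that t by (simp add: matrix_vector_mult_diff_distrib matrix_vector_mult_diff_rdistrib)
  have "((\<lambda>s. K * norm (c s - c t - (M s - M t) *v y t)) \<longlongrightarrow> K * norm (c t - c t - (M t - M t) *v y t)) (at t within S)"
    by (intro tendsto_intros Mc cc bounded_bilinear.tendsto[OF bounded_bilinear_mv])
  then have l1: "((\<lambda>s. K * norm (c s - c t - (M s - M t) *v y t)) \<longlongrightarrow> 0) (at t within S)" by simp
  have "((\<lambda>s. y s - y t) \<longlongrightarrow> 0) (at t within S)"
  proof (rule Lim_null_comparison[OF _ l1])
    show "\<forall>\<^sub>F s in at t within S. norm (y s - y t) \<le> K * norm (c s - c t - (M s - M t) *v y t)"
      using ev by eventually_elim (use coer key1 in metis)
  qed
  then have yc: "(y \<longlongrightarrow> y t) (at t within S)" by (simp add: LIM_zero_iff)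
  have dM': "((\<lambda>s. norm (M s - M t - (s - t) *\<^sub>R M') / norm (s - t)) \<longlongrightarrow> 0) (at t within S)"
    using dM unfolding has_vector_derivative_def has_derivative_iff_norm by simp
  have dc': "((\<lambda>s. norm (c s - c t - (s - t) *\<^sub>R c') / norm (s - t)) \<longlongrightarrow> 0) (at t within S)"
    using dc unfolding has_vector_derivative_def has_derivative_iff_norm by simp
  let ?B = "\<lambda>s. K * (norm (c s - c t - (s - t) *\<^sub>R c') / norm (s - t)
     + norm (M s - M t - (s - t) *\<^sub>R M') / norm (s - t) * norm (y s) + norm M' * norm (y s - y t))"
  have lB: "(?B \<longlongrightarrow> K * (0 + 0 * norm (y t) + norm M' * norm (y t - y t))) (at t within S)"
    by (intro tendsto_intros dc' dM' yc)
  have bnd: "norm (y s - y t - (s - t) *\<^sub>R u) / norm (s - t) \<le> ?B s" if s: "s \<in> S" "s \<noteq> t" for s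
  proof -
    let ?X1 = "c s - c t - (s - t) *\<^sub>R c'"
    let ?X2 = "(M s - M t - (s - t) *\<^sub>R M') *v y s"
    let ?X3 = "(s - t) *\<^sub>R (M' *v (y s - y t))"
    have u': "c' = M t *v u + M' *v y t" using u by (simp add: algebra_simps)
    have "M t *v (y s - y t - (s - t) *\<^sub>R u) = ?X1 - ?X2 - ?X3"
      unfolding u' using eq s t
      by (simp add: matrix_vector_mult_diff_distrib matrix_vector_mult_diff_rdistrib
          matrix_vector_mult_add_rdistrib scaleR_diff_right algebra_simps
          mv_scaleR_left mv_scaleR_right)
    then have "norm (y s - y t - (s - t) *\<^sub>R u) \<le> K * norm (?X1 - ?X2 - ?X3)"
      using coer t by metis
    also have "\<dots> \<le> K * (norm ?X1 + norm ?X2 + norm ?X3)"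
      using K0 by (intro mult_left_mono norm3) auto
    also have "\<dots> \<le> K * (norm ?X1 + norm (M s - M t - (s - t) *\<^sub>R M') * norm (y s) + \<bar>s - t\<bar> * (norm M' * norm (y s - y t)))"
      using K0 by (intro mult_left_mono add_mono order.refl) (auto simp: mv_norm_le mult_left_mono)
    finally have "norm (y s - y t - (s - t) *\<^sub>R u) \<le> \<dots>" .
    then show ?thesis using s K0 by (simp add: divide_simps algebra_simps) 
  qed
  show ?thesis
    unfolding has_vector_derivative_def has_derivative_iff_norm
  proof
    show "bounded_linear (\<lambda>h. h *\<^sub>R u)" by (simp add: bounded_linear_scaleR_left)
    show "((\<lambda>s. norm (y s - y t - (s - t) *\<^sub>R u) / norm (s - t)) \<longlongrightarrow> 0) (at t within S)"
    proof (rule Lim_null_comparison)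
      show "\<forall>\<^sub>F s in at t within S. norm (norm (y s - y t - (s - t) *\<^sub>R u) / norm (s - t)) \<le> ?B s"
        unfolding eventually_at_filter using bnd by (auto intro!: always_eventually)
      show "(?B \<longlongrightarrow> 0) (at t within S)" using lB by simp
    qed
  qed
qed
lemma gronwall:
  fixes V V' :: "real \<Rightarrow> real"
  assumes a: "a > 0" and c: "c \<ge> 0"
    and d: "\<forall>s\<in>{0..T}. (V has_real_derivative V' s) (at s within {0..T})"
    and le: "\<forall>s\<in>{0..T}. V' s \<le> a * V s + c"
    and t: "t \<in> {0..T}"
  shows "V t \<le> (V 0 + c / a) * exp (a * t)"
proof -
  define W where "W s = (V s + c / a) * exp (- a * s)" for s
  have dW: "(W has_real_derivative (V' s - a * V s - c) * exp (- a * s)) (at s within {0..T})"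
    if "s \<in> {0..T}" for s
  proof -
    have 1: "((\<lambda>s. V s + c / a) has_real_derivative V' s) (at s within {0..T})"
      using d that by (auto intro!: derivative_eq_intros)
    have 2: "((\<lambda>s. exp (- a * s)) has_real_derivative exp (- a * s) * (- a)) (at s within {0..T})"
      by (auto intro!: derivative_eq_intros)
    show ?thesis unfolding W_def
      using DERIV_mult[OF 1 2] by (rule DERIV_cong) (use a in \<open>simp add: algebra_simps\<close>)
  qed
  have cont: "continuous_on {0..T} W"
    using dW by (meson DERIV_continuous continuous_on_eq_continuous_within)
  have "W t \<le> W 0"
  proof (rule DERIV_nonpos_imp_decreasing_open[of 0 t W])
    show "0 \<le> t" using t by simp
    show "continuous_on {0..t} W" using t by (intro continuous_on_subset[OF cont]) auto
    fix x assume x: "0 < x" "x < t"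
    then have xi: "x \<in> interior {0..T}" using t by auto
    have "(W has_real_derivative (V' x - a * V x - c) * exp (- a * x)) (at x)"
      using dW[of x] x t at_within_interior[OF xi] by auto
    moreover have "(V' x - a * V x - c) * exp (- a * x) \<le> 0"
      using le[rule_format, of x] x t by (intro mult_nonpos_nonneg) auto
    ultimately show "\<exists>y. (W has_real_derivative y) (at x) \<and> y \<le> 0" by blast
  qed
  then have "(V t + c / a) * exp (- a * t) \<le> V 0 + c / a" by (simp add: W_def)
  then have "V t + c / a \<le> (V 0 + c / a) * exp (a * t)"
    by (simp add: exp_minus field_simps)
  then show ?thesis using a c by (smt (verit) divide_nonneg_pos)
qed

lemma coer_inv:
  fixes M :: "real^'m^'m"
  assumes "\<forall>u. norm u \<le> K * norm (M *v u)"
  shows "M *v (matrix_inv M *v z) = z"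
proof -
  have "\<forall>x. M *v x = 0 \<longrightarrow> x = 0" using assms by (metis mult_zero_right norm_le_zero_iff norm_zero)
  then have "invertible M" using matrix_left_invertible_ker invertible_left_inverse by blast
  then have "M ** matrix_inv M = mat 1"
    unfolding invertible_def matrix_inv_def by (metis (mono_tags, lifting) someI_ex)
  then show ?thesis by (metis matrix_vector_mul_assoc matrix_vector_mul_lid)
qed

lemma bdd_cball:
  fixes f :: "'a::euclidean_space \<Rightarrow> 'b::real_normed_vector"
  assumes "continuous_on UNIV f"
  shows "\<exists>B\<ge>0. \<forall>y\<in>cball 0 R. norm (f y) \<le> B"
proof -
  have "compact (f ` cball 0 R)"
    using assms by (intro compact_continuous_image) (auto intro: continuous_on_subset)
  then obtain B where "\<forall>z\<in>f ` cball 0 R. norm z \<le> B" using compact_imp_bounded bounded_iff by metis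
  then show ?thesis by (intro exI[of _ "max B 0"]) auto
qed

lemma lip_cball:
  fixes f :: "'a::euclidean_space \<Rightarrow> 'b::real_normed_vector"
  assumes "\<And>y. (f has_derivative blinfun_apply (f' y)) (at y)"
    and "\<forall>y\<in>cball 0 R. norm (f' y) \<le> B"
    and "x \<in> cball 0 R" "z \<in> cball 0 R"
  shows "norm (f x - f z) \<le> B * norm (x - z)"
proof (rule differentiable_bound[where S="cball 0 R" and f'="\<lambda>y. blinfun_apply (f' y)"])
  show "convex (cball (0::'a) R)" by simp
  fix y :: 'a assume "y \<in> cball 0 R"
  then show "(f has_derivative blinfun_apply (f' y)) (at y within cball 0 R)"
    using assms(1) has_derivative_at_withinI by blast
  show "onorm (blinfun_apply (f' y)) \<le> B" using assms(2) \<open>y \<in> cball 0 R\<close> by (simp add: norm_blinfun.rep_eq[symmetric])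
qed (use assms in auto)

lemma sym_deriv:
  fixes A :: "'a::real_normed_vector \<Rightarrow> real^'m^'m"
  assumes sym: "\<And>r. transpose (A r) = A r"
    and d: "(A has_derivative blinfun_apply D) (at r)"
  shows "transpose (D h) = D h"
proof -
  have lt: "linear (transpose :: real^'m^'m \<Rightarrow> real^'m^'m)"
    by (auto simp: linear_iff transpose_def vec_eq_iff)
  then have bl: "bounded_linear (transpose :: real^'m^'m \<Rightarrow> real^'m^'m)"
    by (simp add: linear_conv_bounded_linear)
  have "((\<lambda>r. transpose (A r)) has_derivative (\<lambda>h. transpose (D h))) (at r)"
    using bounded_linear.has_derivative[OF bl d] .
  then have "(A has_derivative (\<lambda>h. transpose (D h))) (at r)" using sym by simp
  then have "(\<lambda>h. transpose (D h)) = blinfun_apply D"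
    using d by (rule has_derivative_unique)
  then show ?thesis by metis
qed

lemma inner_sym:
  fixes M :: "real^'m^'m"
  assumes "transpose M = M"
  shows "u \<bullet> (M *v z) = z \<bullet> (M *v u)"
proof -
  have "u \<bullet> (M *v z) = (u v* M) \<bullet> z" by (simp add: dot_lmul_matrix)
  also have "u v* M = M *v u" using vector_transpose_matrix[of u M] assms by simp
  finally show ?thesis by (simp add: inner_commute)
qed

lemma norm_chi_le:
  assumes "\<And>k. \<bar>f k\<bar> \<le> B"
  shows "norm (\<chi> k. f k :: real^'k) \<le> real CARD('k) * B"
proof -
  have "norm (\<chi> k. f k :: real^'k) \<le> (\<Sum>k\<in>UNIV. \<bar>(\<chi> k. f k :: real^'k) $ k\<bar>)" by (rule norm_le_l1_cart)
  also have "\<dots> \<le> (\<Sum>k\<in>(UNIV::'k set). B)" using assms by (intro sum_mono) simp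
  finally show ?thesis by simp
qed

lemma sum_axis_eq: "(\<Sum>k\<in>UNIV. (p $ k) *\<^sub>R axis k (1::real)) = (p::real^'n)"
  by (simp add: vec_eq_iff axis_def if_distrib cong: if_cong)






locale base =
  fixes F :: "real^'n \<Rightarrow> real^'n" and A :: "real^'n \<Rightarrow> real^'m^'m" and b :: "real^'n \<Rightarrow> real^'m"
    and A1 :: "real^'n \<Rightarrow> ((real^'n) \<Rightarrow>\<^sub>L (real^'m^'m))"
    and A2 :: "real^'n \<Rightarrow> ((real^'n) \<Rightarrow>\<^sub>L ((real^'n) \<Rightarrow>\<^sub>L (real^'m^'m)))"
    and A3 :: "real^'n \<Rightarrow> ((real^'n) \<Rightarrow>\<^sub>L ((real^'n) \<Rightarrow>\<^sub>L ((real^'n) \<Rightarrow>\<^sub>L (real^'m^'m))))"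
    and b1 :: "real^'n \<Rightarrow> ((real^'n) \<Rightarrow>\<^sub>L (real^'m))"
    and b2 :: "real^'n \<Rightarrow> ((real^'n) \<Rightarrow>\<^sub>L ((real^'n) \<Rightarrow>\<^sub>L (real^'m)))"
    and b3 :: "real^'n \<Rightarrow> ((real^'n) \<Rightarrow>\<^sub>L ((real^'n) \<Rightarrow>\<^sub>L ((real^'n) \<Rightarrow>\<^sub>L (real^'m))))"
    and F1 :: "real^'n \<Rightarrow> ((real^'n) \<Rightarrow>\<^sub>L (real^'n))"
    and c0 R tf :: real
    and MA0 MA1 MA2 MA3 Mb0 Mb1 Mb2 Mb3 MF1 :: real
  assumes dA: "\<And>y. (A has_derivative blinfun_apply (A1 y)) (at y)"
    and dA1: "\<And>y. (A1 has_derivative blinfun_apply (A2 y)) (at y)"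
    and dA2: "\<And>y. (A2 has_derivative blinfun_apply (A3 y)) (at y)"
    and db: "\<And>y. (b has_derivative blinfun_apply (b1 y)) (at y)"
    and db1: "\<And>y. (b1 has_derivative blinfun_apply (b2 y)) (at y)"
    and db2: "\<And>y. (b2 has_derivative blinfun_apply (b3 y)) (at y)"
    and dF: "\<And>y. (F has_derivative blinfun_apply (F1 y)) (at y)"
    and sym: "\<And>r. transpose (A r) = A r"
    and coer: "\<And>r u. norm u \<le> c0 * norm (A r *v u)"
    and coer2: "\<And>r u. (norm u)\<^sup>2 \<le> c0 * (u \<bullet> (A r *v u))"
    and c0: "c0 > 0" and R: "R > 0" and tf: "tf > 0"
    and BA0: "\<And>y. norm y \<le> R \<Longrightarrow> norm (A y) \<le> MA0"
    and BA1: "\<And>y. norm y \<le> R \<Longrightarrow> norm (A1 y) \<le> MA1"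
    and BA2: "\<And>y. norm y \<le> R \<Longrightarrow> norm (A2 y) \<le> MA2"
    and BA3: "\<And>y. norm y \<le> R \<Longrightarrow> norm (A3 y) \<le> MA3"
    and Bb0: "\<And>y. norm y \<le> R \<Longrightarrow> norm (b y) \<le> Mb0"
    and Bb1: "\<And>y. norm y \<le> R \<Longrightarrow> norm (b1 y) \<le> Mb1"
    and Bb2: "\<And>y. norm y \<le> R \<Longrightarrow> norm (b2 y) \<le> Mb2"
    and Bb3: "\<And>y. norm y \<le> R \<Longrightarrow> norm (b3 y) \<le> Mb3"
    and BF1: "\<And>y. norm y \<le> R \<Longrightarrow> norm (F1 y) \<le> MF1"
begin

lemma M_nonneg: "MA0 \<ge> 0" "MA1 \<ge> 0" "MA2 \<ge> 0" "MA3 \<ge> 0" "Mb0 \<ge> 0" "Mb1 \<ge> 0" "Mb2 \<ge> 0" "Mb3 \<ge> 0" "MF1 \<ge> 0"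
  using BA0[of 0] BA1[of 0] BA2[of 0] BA3[of 0] Bb0[of 0] Bb1[of 0] Bb2[of 0] Bb3[of 0] BF1[of 0] R
  by (auto intro: order.trans[OF norm_ge_zero])

lemma partialA: "partial A r k = A1 r (axis k 1)"
  unfolding partial_def using frechet_derivative_at[OF dA[of r]] by simp

lemma partialb: "partial b r k = b1 r (axis k 1)"
  unfolding partial_def using frechet_derivative_at[OF db[of r]] by simp

lemma symA1: "transpose (A1 r h) = A1 r h"
  by (rule sym_deriv[OF sym dA])

lemma inv_eq: "A r *v (matrix_inv (A r) *v z) = z"
  by (rule coer_inv) (use coer in blast)

lemma inv_norm: "norm (matrix_inv (A r) *v z) \<le> c0 * norm z"
  using coer[of "matrix_inv (A r) *v z" r] inv_eq by simp

lemma solve_unique: "A r *v u = z \<Longrightarrow> u = matrix_inv (A r) *v z"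
proof -
  assume h: "A r *v u = z"
  have "norm (u - matrix_inv (A r) *v z) \<le> c0 * norm (A r *v (u - matrix_inv (A r) *v z))" by (rule coer)
  also have "A r *v (u - matrix_inv (A r) *v z) = 0"
    using h inv_eq by (simp add: matrix_vector_mult_diff_distrib)
  finally show ?thesis by simp
qed

lemma mvA: "norm y \<le> R \<Longrightarrow> norm (A y *v u) \<le> MA0 * norm u"
  by (meson BA0 mv_norm_le mult_right_mono norm_ge_zero order.trans)

definition xstar where "xstar r = matrix_inv (A r) *v b r"

lemma xstar_eq: "A r *v xstar r = b r" unfolding xstar_def by (rule inv_eq)

definition "Y0 = c0 * Mb0"

lemma xstar_bnd: "norm r \<le> R \<Longrightarrow> norm (xstar r) \<le> Y0"
  unfolding xstar_def Y0_def using inv_norm Bb0 c0 by (meson mult_left_mono order.trans less_imp_le)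

lemma lipA: "norm r1 \<le> R \<Longrightarrow> norm r2 \<le> R \<Longrightarrow> norm (A r1 - A r2) \<le> MA1 * norm (r1 - r2)"
  by (rule lip_cball[OF dA]) (use BA1 in auto)
lemma lipA1: "norm r1 \<le> R \<Longrightarrow> norm r2 \<le> R \<Longrightarrow> norm (A1 r1 - A1 r2) \<le> MA2 * norm (r1 - r2)"
  by (rule lip_cball[OF dA1]) (use BA2 in auto)
lemma lipb: "norm r1 \<le> R \<Longrightarrow> norm r2 \<le> R \<Longrightarrow> norm (b r1 - b r2) \<le> Mb1 * norm (r1 - r2)"
  by (rule lip_cball[OF db]) (use Bb1 in auto)
lemma lipb1: "norm r1 \<le> R \<Longrightarrow> norm r2 \<le> R \<Longrightarrow> norm (b1 r1 - b1 r2) \<le> Mb2 * norm (r1 - r2)"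
  by (rule lip_cball[OF db1]) (use Bb2 in auto)
lemma lipF: "norm r1 \<le> R \<Longrightarrow> norm r2 \<le> R \<Longrightarrow> norm (F r1 - F r2) \<le> MF1 * norm (r1 - r2)"
  by (rule lip_cball[OF dF]) (use BF1 in auto)

definition "Lx = c0 * (Mb1 + MA1 * Y0)"

lemma lipx: assumes "norm r1 \<le> R" "norm r2 \<le> R"
  shows "norm (xstar r1 - xstar r2) \<le> Lx * norm (r1 - r2)"
proof -
  have "A r1 *v (xstar r1 - xstar r2) = (b r1 - b r2) - (A r1 - A r2) *v xstar r2"
    using xstar_eq[of r1] xstar_eq[of r2]
    by (simp add: matrix_vector_mult_diff_distrib matrix_vector_mult_diff_rdistrib)
  then have "norm (xstar r1 - xstar r2) \<le> c0 * norm ((b r1 - b r2) - (A r1 - A r2) *v xstar r2)"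
    using coer by metis
  also have "\<dots> \<le> c0 * (norm (b r1 - b r2) + norm ((A r1 - A r2) *v xstar r2))"
    using c0 by (intro mult_left_mono norm_triangle_ineq4) auto
  also have "\<dots> \<le> c0 * (Mb1 * norm (r1 - r2) + MA1 * norm (r1 - r2) * Y0)"
  proof (intro mult_left_mono add_mono)
    show "norm (b r1 - b r2) \<le> Mb1 * norm (r1 - r2)" using lipb assms by blast
    have "norm ((A r1 - A r2) *v xstar r2) \<le> norm (A r1 - A r2) * norm (xstar r2)" by (rule mv_norm_le)
    also have "\<dots> \<le> MA1 * norm (r1 - r2) * Y0"
      using lipA[OF assms] xstar_bnd[OF assms(2)] by (intro mult_mono) (auto simp: M_nonneg)
    finally show "norm ((A r1 - A r2) *v xstar r2) \<le> MA1 * norm (r1 - r2) * Y0" .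
  qed (use c0 in auto)
  finally show ?thesis by (simp add: Lx_def algebra_simps)
qed

lemma quad_diff:
  fixes M1 M2 :: "real^'m^'m"
  shows "\<bar>x1 \<bullet> (M1 *v x1) - x2 \<bullet> (M2 *v x2)\<bar> \<le> norm (x1 - x2) * norm M1 * norm x1
     + norm x2 * norm (M1 - M2) * norm x1 + norm x2 * norm M2 * norm (x1 - x2)"
proof -
  have eq: "x1 \<bullet> (M1 *v x1) - x2 \<bullet> (M2 *v x2) = (x1 - x2) \<bullet> (M1 *v x1) + x2 \<bullet> ((M1 - M2) *v x1) + x2 \<bullet> (M2 *v (x1 - x2))"
    by (simp add: inner_diff_left inner_diff_right matrix_vector_mult_diff_distrib matrix_vector_mult_diff_rdistrib)
  have a: "\<bar>(x1 - x2) \<bullet> (M1 *v x1)\<bar> \<le> norm (x1 - x2) * norm M1 * norm x1"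
    using Cauchy_Schwarz_ineq2[of "x1 - x2" "M1 *v x1"] mv_norm_le[of M1 x1]
    by (smt (verit, best) mult.assoc mult_left_mono norm_ge_zero)
  have b: "\<bar>x2 \<bullet> ((M1 - M2) *v x1)\<bar> \<le> norm x2 * norm (M1 - M2) * norm x1"
    using Cauchy_Schwarz_ineq2[of "x2" "(M1 - M2) *v x1"] mv_norm_le[of "M1 - M2" x1]
    by (smt (verit, best) mult.assoc mult_left_mono norm_ge_zero)
  have c: "\<bar>x2 \<bullet> (M2 *v (x1 - x2))\<bar> \<le> norm x2 * norm M2 * norm (x1 - x2)"
    using Cauchy_Schwarz_ineq2[of "x2" "M2 *v (x1 - x2)"] mv_norm_le[of M2 "x1 - x2"]
    by (smt (verit, best) mult.assoc mult_left_mono norm_ge_zero)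
  show ?thesis unfolding eq using a b c by linarith
qed

lemma lin_diff:
  fixes x1 x2 :: "'a::real_inner"
  shows "\<bar>\<beta>1 \<bullet> x1 - \<beta>2 \<bullet> x2\<bar> \<le> norm (\<beta>1 - \<beta>2) * norm x1 + norm \<beta>2 * norm (x1 - x2)"
proof -
  have "\<beta>1 \<bullet> x1 - \<beta>2 \<bullet> x2 = (\<beta>1 - \<beta>2) \<bullet> x1 + \<beta>2 \<bullet> (x1 - x2)"
    by (simp add: inner_diff_left inner_diff_right)
  then show ?thesis
    using Cauchy_Schwarz_ineq2[of "\<beta>1 - \<beta>2" x1] Cauchy_Schwarz_ineq2[of \<beta>2 "x1 - x2"] by linarith
qed

lemma blin_axis_le: "norm (blinfun_apply f (axis k (1::real))) \<le> norm f"
  using norm_blinfun[of f "axis k 1"] by simp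

lemma dQ_comp: "dQdr A b r x $ k = 1/2 * (x \<bullet> (A1 r (axis k 1) *v x)) - b1 r (axis k 1) \<bullet> x"
  by (simp add: dQdr_def partialA partialb)

lemma lipdQ:
  assumes r: "norm r1 \<le> R" "norm r2 \<le> R" and x: "norm x1 \<le> X" "norm x2 \<le> X"
  shows "norm (dQdr A b r1 x1 - dQdr A b r2 x2) \<le> real CARD('n) * ((MA1 * X + Mb1) * norm (x1 - x2)
      + (1/2 * X * X * MA2 + X * Mb2) * norm (r1 - r2))"
proof -
  have X: "X \<ge> 0" using x norm_ge_zero order.trans by blast
  have eq: "dQdr A b r1 x1 - dQdr A b r2 x2 = (\<chi> k. (1/2 * (x1 \<bullet> (A1 r1 (axis k 1) *v x1)) - b1 r1 (axis k 1) \<bullet> x1)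
     - (1/2 * (x2 \<bullet> (A1 r2 (axis k 1) *v x2)) - b1 r2 (axis k 1) \<bullet> x2))"
    by (simp add: vec_eq_iff dQ_comp)
  show ?thesis unfolding eq
  proof (rule norm_chi_le)
    fix k :: 'n
    let ?M1 = "A1 r1 (axis k 1)" and ?M2 = "A1 r2 (axis k 1)"
    let ?b1 = "b1 r1 (axis k 1)" and ?b2 = "b1 r2 (axis k 1)"
    have nM1: "norm ?M1 \<le> MA1" using blin_axis_le BA1 r by (meson order.trans)
    have nM2: "norm ?M2 \<le> MA1" using blin_axis_le BA1 r by (meson order.trans)
    have nM12: "norm (?M1 - ?M2) \<le> MA2 * norm (r1 - r2)"
      using blin_axis_le[of "A1 r1 - A1 r2" k] lipA1[OF r] by (simp add: blinfun.diff_left)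
    have nb2: "norm ?b2 \<le> Mb1" using blin_axis_le Bb1 r by (meson order.trans)
    have nb12: "norm (?b1 - ?b2) \<le> Mb2 * norm (r1 - r2)"
      using blin_axis_le[of "b1 r1 - b1 r2" k] lipb1[OF r] by (simp add: blinfun.diff_left)
    have q: "\<bar>x1 \<bullet> (?M1 *v x1) - x2 \<bullet> (?M2 *v x2)\<bar> \<le> norm (x1 - x2) * MA1 * X + X * (MA2 * norm (r1 - r2)) * X + X * MA1 * norm (x1 - x2)"
    proof -
      have "norm (x1 - x2) * norm ?M1 * norm x1 \<le> norm (x1 - x2) * MA1 * X"
        using nM1 x by (intro mult_mono) (auto simp: M_nonneg)
      moreover have "norm x2 * norm (?M1 - ?M2) * norm x1 \<le> X * (MA2 * norm (r1 - r2)) * X"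
        using nM12 x X by (intro mult_mono) (auto simp: M_nonneg)
      moreover have "norm x2 * norm ?M2 * norm (x1 - x2) \<le> X * MA1 * norm (x1 - x2)"
        using nM2 x X by (intro mult_mono) (auto simp: M_nonneg)
      ultimately show ?thesis using quad_diff[of x1 ?M1 x2 ?M2] by linarith
    qed
    have l: "\<bar>?b1 \<bullet> x1 - ?b2 \<bullet> x2\<bar> \<le> Mb2 * norm (r1 - r2) * X + Mb1 * norm (x1 - x2)"
    proof -
      have "norm (?b1 - ?b2) * norm x1 \<le> Mb2 * norm (r1 - r2) * X"
        using nb12 x by (intro mult_mono) (auto simp: M_nonneg)
      moreover have "norm ?b2 * norm (x1 - x2) \<le> Mb1 * norm (x1 - x2)"
        using nb2 by (intro mult_right_mono) auto
      ultimately show ?thesis using lin_diff[of ?b1 x1 ?b2 x2] by linarith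
    qed
    show "\<bar>(1/2 * (x1 \<bullet> (?M1 *v x1)) - ?b1 \<bullet> x1) - (1/2 * (x2 \<bullet> (?M2 *v x2)) - ?b2 \<bullet> x2)\<bar>
       \<le> (MA1 * X + Mb1) * norm (x1 - x2) + (1/2 * X * X * MA2 + X * Mb2) * norm (r1 - r2)"
      using q l by (simp add: abs_le_iff algebra_simps) linarith?
  qed
qed

definition G where "G \<rho> = F \<rho> - dQdr A b \<rho> (xstar \<rho>)"
definition "LG = MF1 + real CARD('n) * ((MA1 * Y0 + Mb1) * Lx + (1/2 * Y0 * Y0 * MA2 + Y0 * Mb2))"

lemma lipG: assumes r: "norm r1 \<le> R" "norm r2 \<le> R"
  shows "norm (G r1 - G r2) \<le> LG * norm (r1 - r2)"
proof -
  have "G r1 - G r2 = (F r1 - F r2) - (dQdr A b r1 (xstar r1) - dQdr A b r2 (xstar r2))"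
    by (simp add: G_def)
  then have "norm (G r1 - G r2) \<le> norm (F r1 - F r2) + norm (dQdr A b r1 (xstar r1) - dQdr A b r2 (xstar r2))"
    by (metis norm_triangle_ineq4)
  also have "\<dots> \<le> MF1 * norm (r1 - r2) + real CARD('n) * ((MA1 * Y0 + Mb1) * (Lx * norm (r1 - r2))
      + (1/2 * Y0 * Y0 * MA2 + Y0 * Mb2) * norm (r1 - r2))"
  proof (intro add_mono)
    show "norm (F r1 - F r2) \<le> MF1 * norm (r1 - r2)" using lipF r by blast
    have Y0: "Y0 \<ge> 0" unfolding Y0_def using c0 M_nonneg by simp
    have "norm (dQdr A b r1 (xstar r1) - dQdr A b r2 (xstar r2)) \<le> real CARD('n) * ((MA1 * Y0 + Mb1) * norm (xstar r1 - xstar r2)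
      + (1/2 * Y0 * Y0 * MA2 + Y0 * Mb2) * norm (r1 - r2))"
      by (rule lipdQ) (use r xstar_bnd in auto)
    also have "\<dots> \<le> real CARD('n) * ((MA1 * Y0 + Mb1) * (Lx * norm (r1 - r2))
      + (1/2 * Y0 * Y0 * MA2 + Y0 * Mb2) * norm (r1 - r2))"
      using lipx[OF r] Y0 M_nonneg by (intro mult_left_mono add_mono mult_left_mono) auto
    finally show "norm (dQdr A b r1 (xstar r1) - dQdr A b r2 (xstar r2)) \<le> \<dots>" .
  qed
  also have "\<dots> = LG * norm (r1 - r2)" by (simp add: LG_def algebra_simps)
  finally show ?thesis .
qed

end




lemma mv_le: "norm (M::real^'a^'b) \<le> K \<Longrightarrow> norm (M *v u) \<le> K * norm u"
  by (meson mv_norm_le mult_right_mono norm_ge_zero order.trans)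

lemma blin_le: "norm f \<le> K \<Longrightarrow> norm h \<le> H \<Longrightarrow> norm (blinfun_apply f h) \<le> K * H"
  by (meson norm_blinfun mult_mono norm_ge_zero order.trans)

definition (in base) "Y1 = c0 * (Mb1 * R + MA1 * R * Y0)"
definition (in base) "Y2 = c0 * ((Mb2 * R * R + Mb1 * R) + (MA2 * R * R + MA1 * R) * Y0 + 2 * (MA1 * R * Y1))"
definition (in base) "aE = 1 + MA1 * R * c0"
definition (in base) "KE = ((R + Y1)^2 / 2 + Y2^2 / 2) * exp (aE * tf)"
definition (in base) "Ke = sqrt (2 * c0 * KE)"
definition (in base) "Kd = sqrt (2 * KE)"

lemma (in base) consts_nonneg: "Y0 \<ge> 0" "Y1 \<ge> 0" "Y2 \<ge> 0" "aE \<ge> 1" "KE \<ge> 0" "Ke \<ge> 0" "Kd \<ge> 0"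
  using M_nonneg c0 R by (auto simp: Y0_def Y1_def Y2_def aE_def KE_def Ke_def Kd_def)


definition (in base) "L0 = MA1 * Y0 + Mb1"
definition (in base) "M0 = c0 * L0"
definition (in base) "L1 = MA2 * R * Y0 + MA1 * Y1 + Mb2 * R"
definition (in base) "M1 = c0 * (L1 + MA1 * R * M0)"
definition (in base) "Kg = real CARD('n) * (M0 * Kd)"
definition (in base) "Kp = real CARD('n) * (1/2 * MA1 * Ke^2 + M1 * Kd + M0 * Y2)"
definition (in base) "aV = 2 + LG"
definition (in base) "KV = (Kg^2 + (Kg^2 + Kp^2)) * exp (aV * tf)"

lemma (in base) consts_nonneg2: "L0 \<ge> 0" "M0 \<ge> 0" "L1 \<ge> 0" "M1 \<ge> 0" "Kg \<ge> 0" "Kp \<ge> 0" "LG \<ge> 0" "aV \<ge> 1" "KV \<ge> 0" "Lx \<ge> 0"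
proof -
  show L0: "L0 \<ge> 0" "M0 \<ge> 0" "L1 \<ge> 0" "M1 \<ge> 0" "Kg \<ge> 0" "Kp \<ge> 0" "Lx \<ge> 0"
    using M_nonneg c0 R consts_nonneg by (auto simp: L0_def M0_def L1_def M1_def Kg_def Kp_def Lx_def)
  show "LG \<ge> 0" using M_nonneg c0 R consts_nonneg L0 by (auto simp: LG_def)
  then show "aV \<ge> 1" "KV \<ge> 0" by (auto simp: aV_def KV_def)
qed


definition (in base) "Vb = Kd + Y1"
definition (in base) "Ka = MF1 * R + real CARD('n) * (1/2 * (R * (MA1 * Vb + MA2 * R * R) + Vb * (MA1 * R)) + (Mb1 * Vb + Mb2 * R * R))"
definition (in base) "NA2 = MA2 * R * R + MA1 * R"
definition (in base) "NA3 = MA2 * R * R + (MA2 * R * R + MA3 * R * R * R) + (MA1 * Ka + MA2 * R * R)"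
definition (in base) "NB3 = Mb2 * R * R + (Mb2 * R * R + Mb3 * R * R * R) + (Mb1 * Ka + Mb2 * R * R)"
definition (in base) "Y3 = c0 * (NB3 + (NA2 * Y1 + NA3 * Y0) + 2 * (MA1 * R * Y2 + NA2 * Y1) + MA1 * R * Y2)"
definition (in base) "aW = 2 * c0 * (MA1 * R + 1)"
definition (in base) "KW = (c0 * Y2^2 + Y3^2 / 2 / aW) * exp (aW * tf)"
definition (in base) "Ke2 = sqrt (4 * c0 * KW)"

lemma (in base) consts_nonneg3: "Vb \<ge> 0" "Ka \<ge> 0" "NA2 \<ge> 0" "NA3 \<ge> 0" "NB3 \<ge> 0" "Y3 \<ge> 0" "aW > 0" "KW \<ge> 0" "Ke2 \<ge> 0"
proof -
  show 1: "Vb \<ge> 0" using consts_nonneg by (simp add: Vb_def)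
  show 2: "Ka \<ge> 0" using 1 M_nonneg R by (simp add: Ka_def)
  show 3: "NA2 \<ge> 0" "NA3 \<ge> 0" "NB3 \<ge> 0" using 2 M_nonneg R by (simp_all add: NA2_def NA3_def NB3_def)
  show 4: "Y3 \<ge> 0" using 3 c0 consts_nonneg M_nonneg R by (simp add: Y3_def)
  show 5: "aW > 0" using c0 M_nonneg R by (simp add: aW_def add_nonneg_pos)
  show 6: "KW \<ge> 0" using 5 c0 by (simp add: KW_def)
  show "Ke2 \<ge> 0" using 6 c0 by (simp add: Ke2_def)
qed

lemma abs4: fixes X1 X2 X3 X4 :: real
  assumes h: "\<bar>X1\<bar> \<le> c1" "\<bar>X2\<bar> \<le> c2" "\<bar>X3\<bar> \<le> c3" "\<bar>X4\<bar> \<le> c4"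
  shows "\<bar>1/2*(X1+X2) - (X3+X4)\<bar> \<le> 1/2*(c1+c2) + (c3+c4)"
proof -
  have a: "\<bar>X1+X2\<bar> \<le> c1+c2" using abs_triangle_ineq[of X1 X2] h by linarith
  have b: "\<bar>X3+X4\<bar> \<le> c3+c4" using abs_triangle_ineq[of X3 X4] h by linarith
  have c: "\<bar>1/2*(X1+X2)\<bar> \<le> 1/2*(c1+c2)" using a by (simp add: abs_mult)
  show ?thesis using abs_triangle_ineq4[of "1/2*(X1+X2)" "X3+X4"] b c by linarith
qed

locale xl = base F A b A1 A2 A3 b1 b2 b3 F1 c0 R tf MA0 MA1 MA2 MA3 Mb0 Mb1 Mb2 Mb3 MF1
  for F :: "real^'n \<Rightarrow> real^'n" and A :: "real^'n \<Rightarrow> real^'m^'m" and b A1 A2 A3 b1 b2 b3 F1 c0 R tf MA0 MA1 MA2 MA3 Mb0 Mb1 Mb2 Mb3 MF1 +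
  fixes eps :: real and r p rs ps :: "real \<Rightarrow> real^'n" and x v xs :: "real \<Rightarrow> real^'m"
  assumes eps: "0 < eps" "eps \<le> 1"
    and dr: "\<And>t. t \<in> {0..tf} \<Longrightarrow> (r has_vector_derivative p t) (at t within {0..tf})"
    and dp: "\<And>t. t \<in> {0..tf} \<Longrightarrow> (p has_vector_derivative (F (r t) - dQdr A b (r t) (x t))) (at t within {0..tf})"
    and dx: "\<And>t. t \<in> {0..tf} \<Longrightarrow> (x has_vector_derivative v t) (at t within {0..tf})"
    and dv: "\<And>t. t \<in> {0..tf} \<Longrightarrow> (v has_vector_derivative ((1/eps) *\<^sub>R (b (r t) - A (r t) *v x t))) (at t within {0..tf})"
    and bnd: "\<And>t. t \<in> {0..tf} \<Longrightarrow> norm (r t) \<le> R \<and> norm (p t) \<le> R \<and> norm (F (r t) - dQdr A b (r t) (x t)) \<le> R \<and> norm (x t) \<le> R"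
    and init: "A (r 0) *v x 0 = b (r 0)" "norm (v 0) \<le> R" "r 0 = rs 0" "p 0 = ps 0"
    and drs: "\<And>t. t \<in> {0..tf} \<Longrightarrow> (rs has_vector_derivative ps t) (at t within {0..tf})"
    and dps: "\<And>t. t \<in> {0..tf} \<Longrightarrow> (ps has_vector_derivative (F (rs t) - dQdr A b (rs t) (xs t))) (at t within {0..tf})"
    and exs: "\<And>t. t \<in> {0..tf} \<Longrightarrow> A (rs t) *v xs t = b (rs t)"
    and bnds: "\<And>t. t \<in> {0..tf} \<Longrightarrow> norm (rs t) \<le> R \<and> norm (ps t) \<le> R"
begin

definition "acc t = F (r t) - dQdr A b (r t) (x t)"
definition "wv t = (1/eps) *\<^sub>R (b (r t) - A (r t) *v x t)"
definition "Ab t = A (r t)"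
definition "A1t t = A1 (r t) (p t)"
definition "A2t t = A2 (r t) (p t) (p t) + A1 (r t) (acc t)"
definition "bb t = b (r t)"
definition "b1t t = b1 (r t) (p t)"
definition "b2t t = b2 (r t) (p t) (p t) + b1 (r t) (acc t)"
definition "y t = matrix_inv (Ab t) *v bb t"
definition "y1 t = matrix_inv (Ab t) *v (b1t t - A1t t *v y t)"
definition "y2 t = matrix_inv (Ab t) *v (b2t t - A2t t *v y t - 2 *\<^sub>R (A1t t *v y1 t))"
definition "e t = x t - y t"
definition "ed t = v t - y1 t"
definition "En t = eps / 2 * (ed t \<bullet> ed t) + 1/2 * (e t \<bullet> (Ab t *v e t))"

lemma rR: "t \<in> {0..tf} \<Longrightarrow> norm (r t) \<le> R" using bnd by blast
lemma pR: "t \<in> {0..tf} \<Longrightarrow> norm (p t) \<le> R" using bnd by blast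
lemma aR: "t \<in> {0..tf} \<Longrightarrow> norm (acc t) \<le> R" using bnd acc_def by simp
lemma xR: "t \<in> {0..tf} \<Longrightarrow> norm (x t) \<le> R" using bnd by blast

lemma coerAb: "\<forall>s\<in>{0..tf}. \<forall>u. norm u \<le> c0 * norm (Ab s *v u)" unfolding Ab_def using coer by blast

lemma y_eq: "Ab t *v y t = bb t" unfolding y_def Ab_def by (rule inv_eq)
lemma y1_eq: "Ab t *v y1 t = b1t t - A1t t *v y t" unfolding y1_def Ab_def by (rule inv_eq)
lemma y2_eq: "Ab t *v y2 t = b2t t - A2t t *v y t - 2 *\<^sub>R (A1t t *v y1 t)" unfolding y2_def Ab_def by (rule inv_eq)
lemma y_xstar: "y t = xstar (r t)" unfolding y_def xstar_def Ab_def bb_def ..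

lemma d_Ab: "t \<in> {0..tf} \<Longrightarrow> (Ab has_vector_derivative A1t t) (at t within {0..tf})"
  unfolding Ab_def A1t_def by (rule vd_chain[OF dA dr])
lemma d_bb: "t \<in> {0..tf} \<Longrightarrow> (bb has_vector_derivative b1t t) (at t within {0..tf})"
  unfolding bb_def b1t_def by (rule vd_chain[OF db dr])
lemma d_A1: "t \<in> {0..tf} \<Longrightarrow> ((\<lambda>t. A1 (r t)) has_vector_derivative A2 (r t) (p t)) (at t within {0..tf})"
  by (rule vd_chain[OF dA1 dr])
lemma d_b1: "t \<in> {0..tf} \<Longrightarrow> ((\<lambda>t. b1 (r t)) has_vector_derivative b2 (r t) (p t)) (at t within {0..tf})"
  by (rule vd_chain[OF db1 dr])
lemma d_A1t: "t \<in> {0..tf} \<Longrightarrow> (A1t has_vector_derivative A2t t) (at t within {0..tf})"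
  unfolding A1t_def A2t_def
  using vd_blin[OF d_A1 dp[unfolded acc_def[symmetric]]] by (simp add: acc_def add.commute)
lemma d_b1t: "t \<in> {0..tf} \<Longrightarrow> (b1t has_vector_derivative b2t t) (at t within {0..tf})"
  unfolding b1t_def b2t_def
  using vd_blin[OF d_b1 dp[unfolded acc_def[symmetric]]] by (simp add: acc_def add.commute)

lemma d_y: assumes t: "t \<in> {0..tf}" shows "(y has_vector_derivative y1 t) (at t within {0..tf})"
  by (rule vd_solve[OF _ t coerAb d_Ab[OF t] d_bb[OF t]]) (use y_eq y1_eq in auto)

lemma d_y1: assumes t: "t \<in> {0..tf}" shows "(y1 has_vector_derivative y2 t) (at t within {0..tf})"
proof (rule vd_solve[OF _ t coerAb d_Ab[OF t]])
  show "\<forall>s\<in>{0..tf}. Ab s *v y1 s = b1t s - A1t s *v y s" using y1_eq by blast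
  show "((\<lambda>s. b1t s - A1t s *v y s) has_vector_derivative (b2t t - (A1t t *v y1 t + A2t t *v y t))) (at t within {0..tf})"
    by (intro has_vector_derivative_diff d_b1t[OF t] vd_mv d_A1t[OF t] d_y[OF t])
  show "Ab t *v y2 t = b2t t - (A1t t *v y1 t + A2t t *v y t) - A1t t *v y1 t"
    unfolding y2_eq by (simp add: algebra_simps scaleR_2)
qed

lemma d_e: "t \<in> {0..tf} \<Longrightarrow> (e has_vector_derivative ed t) (at t within {0..tf})"
  unfolding e_def ed_def by (intro has_vector_derivative_diff dx d_y)

lemma d_ed: "t \<in> {0..tf} \<Longrightarrow> (ed has_vector_derivative (wv t - y2 t)) (at t within {0..tf})"
  unfolding ed_def wv_def by (intro has_vector_derivative_diff dv d_y1)

lemma eps_w: "eps *\<^sub>R wv t = - (Ab t *v e t)"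
proof -
  have "b (r t) = Ab t *v y t" using y_eq bb_def by simp
  then show ?thesis using eps unfolding wv_def e_def Ab_def
    by (simp add: matrix_vector_mult_diff_distrib)
qed

lemma symAb: "u \<bullet> (Ab t *v z) = z \<bullet> (Ab t *v u)" unfolding Ab_def by (rule inner_sym[OF sym])

lemma d_En: assumes t: "t \<in> {0..tf}"
  shows "(En has_real_derivative (- eps * (ed t \<bullet> y2 t) + 1/2 * (e t \<bullet> (A1t t *v e t)))) (at t within {0..tf})"
proof -
  have 1: "((\<lambda>t. ed t \<bullet> ed t) has_real_derivative (ed t \<bullet> (wv t - y2 t) + (wv t - y2 t) \<bullet> ed t)) (at t within {0..tf})"
    by (rule vd_inner[OF d_ed[OF t] d_ed[OF t]])
  have 2: "((\<lambda>t. e t \<bullet> (Ab t *v e t)) has_real_derivative (e t \<bullet> (Ab t *v ed t + A1t t *v e t) + ed t \<bullet> (Ab t *v e t))) (at t within {0..tf})"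
    by (rule vd_inner[OF d_e[OF t] vd_mv[OF d_Ab[OF t] d_e[OF t]]])
  have 3: "(En has_real_derivative (eps / 2 * (ed t \<bullet> (wv t - y2 t) + (wv t - y2 t) \<bullet> ed t)
      + 1/2 * (e t \<bullet> (Ab t *v ed t + A1t t *v e t) + ed t \<bullet> (Ab t *v e t)))) (at t within {0..tf})"
    unfolding En_def[abs_def] by (intro DERIV_add DERIV_cmult 1 2)
  have "ed t \<bullet> (eps *\<^sub>R wv t) = - (ed t \<bullet> (Ab t *v e t))" by (simp add: eps_w)
  then have w: "eps * (ed t \<bullet> wv t) = - (ed t \<bullet> (Ab t *v e t))" by simp
  have s: "e t \<bullet> (Ab t *v ed t) = ed t \<bullet> (Ab t *v e t)" by (rule symAb)
  show ?thesis using 3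
    by (rule DERIV_cong) (simp add: inner_diff_left inner_diff_right inner_add_right inner_commute[of "wv t"] inner_commute[of "y2 t"] algebra_simps w s)
qed

lemma nAb: "t \<in> {0..tf} \<Longrightarrow> norm (Ab t *v u) \<le> MA0 * norm u" unfolding Ab_def using mvA rR by blast
lemma nA1t: "t \<in> {0..tf} \<Longrightarrow> norm (A1t t) \<le> MA1 * R" unfolding A1t_def using blin_le BA1 rR pR by blast
lemma nA2t: "t \<in> {0..tf} \<Longrightarrow> norm (A2t t) \<le> MA2 * R * R + MA1 * R"
proof -
  assume t: "t \<in> {0..tf}"
  have "norm (A2 (r t) (p t) (p t)) \<le> MA2 * R * R"
    by (intro blin_le) (use BA2 rR pR t in auto)
  moreover have "norm (A1 (r t) (acc t)) \<le> MA1 * R" using blin_le BA1 rR aR t by blast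
  ultimately show ?thesis unfolding A2t_def by (smt (verit) norm_triangle_ineq)
qed
lemma nbb: "t \<in> {0..tf} \<Longrightarrow> norm (bb t) \<le> Mb0" unfolding bb_def using Bb0 rR by blast
lemma nb1t: "t \<in> {0..tf} \<Longrightarrow> norm (b1t t) \<le> Mb1 * R" unfolding b1t_def using blin_le Bb1 rR pR by blast
lemma nb2t: "t \<in> {0..tf} \<Longrightarrow> norm (b2t t) \<le> Mb2 * R * R + Mb1 * R"
proof -
  assume t: "t \<in> {0..tf}"
  have "norm (b2 (r t) (p t) (p t)) \<le> Mb2 * R * R"
    by (intro blin_le) (use Bb2 rR pR t in auto)
  moreover have "norm (b1 (r t) (acc t)) \<le> Mb1 * R" using blin_le Bb1 rR aR t by blast
  ultimately show ?thesis unfolding b2t_def by (smt (verit) norm_triangle_ineq)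
qed

lemma invAb: "norm (matrix_inv (Ab t) *v z) \<le> c0 * norm z" unfolding Ab_def by (rule inv_norm)

lemma ny: "t \<in> {0..tf} \<Longrightarrow> norm (y t) \<le> Y0" unfolding y_xstar using xstar_bnd rR by blast

lemma ny1: assumes t: "t \<in> {0..tf}" shows "norm (y1 t) \<le> Y1"
proof -
  have "norm (b1t t - A1t t *v y t) \<le> Mb1 * R + MA1 * R * Y0"
    using nb1t[OF t] mv_le[OF nA1t[OF t], of "y t"] ny[OF t] M_nonneg R
    by (smt (verit) mult_left_mono norm_triangle_ineq4 mult_nonneg_nonneg)
  then show ?thesis unfolding y1_def Y1_def using invAb c0
    by (meson mult_left_mono order.trans less_imp_le)
qed

lemma ny2: assumes t: "t \<in> {0..tf}" shows "norm (y2 t) \<le> Y2"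
proof -
  have a: "norm (A2t t *v y t) \<le> (MA2 * R * R + MA1 * R) * Y0"
    using mv_le[OF nA2t[OF t], of "y t"] ny[OF t] M_nonneg R
    by (smt (verit) mult_left_mono mult_nonneg_nonneg)
  have c: "norm (2 *\<^sub>R (A1t t *v y1 t)) \<le> 2 * (MA1 * R * Y1)"
    using mv_le[OF nA1t[OF t], of "y1 t"] ny1[OF t] M_nonneg R
    by (simp, smt (verit) mult_left_mono mult_nonneg_nonneg)
  have "norm (b2t t - A2t t *v y t - 2 *\<^sub>R (A1t t *v y1 t)) \<le> (Mb2 * R * R + Mb1 * R) + (MA2 * R * R + MA1 * R) * Y0 + 2 * (MA1 * R * Y1)"
    using nb2t[OF t] a c norm3 by (smt (verit))
  then show ?thesis unfolding y2_def Y2_def using invAb c0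
    by (meson mult_left_mono order.trans less_imp_le)
qed

lemma eAe: "(norm (e t))\<^sup>2 \<le> c0 * (e t \<bullet> (Ab t *v e t))" unfolding Ab_def by (rule coer2)
lemma eAe_nonneg: "e t \<bullet> (Ab t *v e t) \<ge> 0"
proof -
  have "0 \<le> c0 * (e t \<bullet> (Ab t *v e t))" using eAe[of t] by (meson order.trans zero_le_power2)
  then show ?thesis using c0 by (simp add: zero_le_mult_iff)
qed

lemma En_bounds: "eps / 2 * (norm (ed t))\<^sup>2 \<le> En t" "1/2 * (e t \<bullet> (Ab t *v e t)) \<le> En t"
  using eAe_nonneg[of t] eps by (auto simp: En_def power2_norm_eq_inner)

lemma e0: "e 0 = 0"
proof -
  have "x 0 = matrix_inv (A (r 0)) *v b (r 0)" using init(1) by (rule solve_unique)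
  then show ?thesis unfolding e_def y_def Ab_def bb_def by simp
qed

lemma t0: "0 \<in> {0..tf}" using tf by simp

lemma ed0: "norm (ed 0) \<le> R + Y1"
  unfolding ed_def using init(2) ny1[OF t0] by (smt (verit) norm_triangle_ineq4)

lemma dEn_le: assumes t: "t \<in> {0..tf}"
  shows "- eps * (ed t \<bullet> y2 t) + 1/2 * (e t \<bullet> (A1t t *v e t)) \<le> aE * En t + eps * Y2\<^sup>2 / 2"
proof -
  have "- (ed t \<bullet> y2 t) \<le> norm (ed t) * norm (y2 t)"
    using Cauchy_Schwarz_ineq2[of "ed t" "y2 t"] by linarith
  also have "\<dots> \<le> norm (ed t) * Y2" using ny2[OF t] by (intro mult_left_mono) auto
  finally have "eps * (- (ed t \<bullet> y2 t)) \<le> eps * (norm (ed t) * Y2)" using eps by (intro mult_left_mono) auto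
  then have "- eps * (ed t \<bullet> y2 t) \<le> eps * (norm (ed t) * Y2)" by simp
  also have "\<dots> \<le> eps / 2 * (norm (ed t))\<^sup>2 + eps * Y2\<^sup>2 / 2"
  proof -
    have "norm (ed t) * Y2 \<le> ((norm (ed t))\<^sup>2 + Y2\<^sup>2) / 2"
      using sum_squares_bound[of "norm (ed t)" Y2] by (simp add: power2_eq_square field_simps) 
    then have "eps * (norm (ed t) * Y2) \<le> eps * (((norm (ed t))\<^sup>2 + Y2\<^sup>2) / 2)"
      using eps by (intro mult_left_mono) auto
    also have "\<dots> = eps / 2 * (norm (ed t))\<^sup>2 + eps * Y2\<^sup>2 / 2" by (simp add: field_simps)
    finally show ?thesis .
  qed
  finally have 1: "- eps * (ed t \<bullet> y2 t) \<le> eps / 2 * (norm (ed t))\<^sup>2 + eps * Y2\<^sup>2 / 2" .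
  have "e t \<bullet> (A1t t *v e t) \<le> norm (e t) * (MA1 * R * norm (e t))"
    using Cauchy_Schwarz_ineq2[of "e t" "A1t t *v e t"] mv_le[OF nA1t[OF t], of "e t"]
    by (smt (verit) mult_left_mono norm_ge_zero abs_le_iff)
  also have "\<dots> = MA1 * R * (norm (e t))\<^sup>2" by (simp add: power2_eq_square)
  also have "\<dots> \<le> MA1 * R * (c0 * (e t \<bullet> (Ab t *v e t)))"
    using eAe[of t] M_nonneg R by (intro mult_left_mono) auto
  finally have 2: "1/2 * (e t \<bullet> (A1t t *v e t)) \<le> MA1 * R * c0 * (1/2 * (e t \<bullet> (Ab t *v e t)))" by simp
  have 3: "MA1 * R * c0 * (1/2 * (e t \<bullet> (Ab t *v e t))) \<le> MA1 * R * c0 * En t"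
    using En_bounds(2)[of t] M_nonneg R c0 by (intro mult_left_mono) auto
  have 4: "eps / 2 * (norm (ed t))\<^sup>2 \<le> En t" by (rule En_bounds(1))
  show ?thesis using 1 2 3 4 unfolding aE_def by (simp add: algebra_simps)
qed

lemma En_le: assumes t: "t \<in> {0..tf}" shows "En t \<le> eps * KE"
proof -
  have "En t \<le> (En 0 + eps * Y2\<^sup>2 / 2 / aE) * exp (aE * t)"
    by (rule gronwall[where V'="\<lambda>t. - eps * (ed t \<bullet> y2 t) + 1/2 * (e t \<bullet> (A1t t *v e t))"])
       (use consts_nonneg eps t d_En dEn_le in auto)
  also have "\<dots> \<le> (eps * ((R + Y1)^2 / 2) + eps * (Y2^2 / 2)) * exp (aE * tf)"
  proof (intro mult_mono)
    have "En 0 = eps / 2 * (norm (ed 0))\<^sup>2" by (simp add: En_def e0 power2_norm_eq_inner)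
    also have "\<dots> \<le> eps / 2 * (R + Y1)^2"
      using ed0 eps by (intro mult_left_mono power_mono) auto
    finally have "En 0 \<le> eps * ((R + Y1)^2 / 2)" by simp
    moreover have "eps * Y2\<^sup>2 / 2 / aE \<le> eps * (Y2^2 / 2)"
    proof -
      have z: "0 \<le> eps * Y2\<^sup>2 / 2" using eps by simp
      have "eps * Y2\<^sup>2 / 2 / aE \<le> eps * Y2\<^sup>2 / 2 / 1" using z consts_nonneg by (intro divide_left_mono) auto
      then show ?thesis by simp
    qed
    ultimately show "En 0 + eps * Y2\<^sup>2 / 2 / aE \<le> eps * ((R + Y1)^2 / 2) + eps * (Y2^2 / 2)" by (simp only: times_divide_eq_right)
    show "exp (aE * t) \<le> exp (aE * tf)" using t consts_nonneg by (intro exp_mono mult_left_mono) auto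
  qed (use eps in auto)
  also have "\<dots> = eps * KE" by (simp add: KE_def algebra_simps)
  finally show ?thesis .
qed

lemma e_bnd: assumes t: "t \<in> {0..tf}" shows "norm (e t) \<le> Ke * sqrt eps"
proof -
  have "e t \<bullet> (Ab t *v e t) \<le> 2 * (eps * KE)" using En_bounds(2)[of t] En_le[OF t] by linarith
  then have "c0 * (e t \<bullet> (Ab t *v e t)) \<le> c0 * (2 * (eps * KE))" using c0 by (intro mult_left_mono) auto
  then have "(norm (e t))\<^sup>2 \<le> 2 * c0 * KE * eps"
    using eAe[of t] by (simp add: algebra_simps)
  then have "norm (e t) \<le> sqrt (2 * c0 * KE * eps)" by (simp add: real_le_rsqrt)
  then show ?thesis by (simp add: Ke_def real_sqrt_mult)
qed

lemma e_sq: assumes t: "t \<in> {0..tf}" shows "(norm (e t))\<^sup>2 \<le> Ke^2 * eps"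
  using e_bnd[OF t] eps consts_nonneg
  by (smt (verit) norm_ge_zero power_mono power_mult_distrib real_sqrt_pow2)

lemma ed_bnd: assumes t: "t \<in> {0..tf}" shows "norm (ed t) \<le> Kd"
proof -
  have "eps / 2 * (norm (ed t))\<^sup>2 \<le> eps * KE" using En_bounds(1)[of t] En_le[OF t] by linarith
  then have "(norm (ed t))\<^sup>2 \<le> 2 * KE" using eps by (simp add: field_simps)
  then show ?thesis by (simp add: Kd_def real_le_rsqrt)
qed

definition "lk k t = A1 (r t) (axis k 1) *v y t - b1 (r t) (axis k 1)"
definition "lk' k t = A2 (r t) (p t) (axis k 1) *v y t + A1 (r t) (axis k 1) *v y1 t - b2 (r t) (p t) (axis k 1)"
definition "mk k t = matrix_inv (Ab t) *v lk k t"
definition "mk' k t = matrix_inv (Ab t) *v (lk' k t - A1t t *v mk k t)"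
definition "g t = (\<chi> k. mk k t \<bullet> ed t)"
definition "g' t = (\<chi> k. mk k t \<bullet> (wv t - y2 t) + mk' k t \<bullet> ed t)"
definition "accs t = F (rs t) - dQdr A b (rs t) (xs t)"
definition "P t = (p t - ps t) - eps *\<^sub>R g t"
definition "V t = (r t - rs t) \<bullet> (r t - rs t) + P t \<bullet> P t"

lemma mk_eq: "Ab t *v mk k t = lk k t" unfolding mk_def Ab_def by (rule inv_eq)
lemma mk'_eq: "Ab t *v mk' k t = lk' k t - A1t t *v mk k t" unfolding mk'_def Ab_def by (rule inv_eq)

lemma d_lk: assumes t: "t \<in> {0..tf}" shows "(lk k has_vector_derivative lk' k t) (at t within {0..tf})"
proof -
  have c: "((\<lambda>t. axis k (1::real)) has_vector_derivative 0) (at t within {0..tf})" by simp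
  have 1: "((\<lambda>t. A1 (r t) (axis k 1)) has_vector_derivative A2 (r t) (p t) (axis k 1)) (at t within {0..tf})"
    using vd_blin[OF d_A1[OF t] c] by simp
  have 2: "((\<lambda>t. b1 (r t) (axis k 1)) has_vector_derivative b2 (r t) (p t) (axis k 1)) (at t within {0..tf})"
    using vd_blin[OF d_b1[OF t] c] by simp
  show ?thesis unfolding lk_def[abs_def] lk'_def
    using has_vector_derivative_diff[OF vd_mv[OF 1 d_y[OF t]] 2] by (simp add: add.commute)
qed

lemma d_mk: assumes t: "t \<in> {0..tf}" shows "(mk k has_vector_derivative mk' k t) (at t within {0..tf})"
  by (rule vd_solve[OF _ t coerAb d_Ab[OF t] d_lk[OF t]]) (use mk_eq mk'_eq in auto)

lemma d_g: assumes t: "t \<in> {0..tf}" shows "(g has_vector_derivative g' t) (at t within {0..tf})"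
  unfolding g_def[abs_def] g'_def
  by (rule vd_vec_lambda, rule vd_inner[OF d_mk[OF t] d_ed[OF t]])

lemma xs_xstar: "t \<in> {0..tf} \<Longrightarrow> xs t = xstar (rs t)"
  unfolding xstar_def by (rule solve_unique[OF exs])

lemma accs_G: "t \<in> {0..tf} \<Longrightarrow> accs t = G (rs t)"
  unfolding accs_def G_def using xs_xstar by simp

lemma key_id: assumes t: "t \<in> {0..tf}"
  shows "acc t - accs t - eps *\<^sub>R g' t = (G (r t) - G (rs t))
     + (\<chi> k. - 1/2 * (e t \<bullet> (A1 (r t) (axis k 1) *v e t)) - eps * (mk' k t \<bullet> ed t) + eps * (mk k t \<bullet> y2 t))"
proof -
  have gx: "x t = y t + e t" by (simp add: e_def)
  have comp: "(dQdr A b (r t) (x t) - dQdr A b (r t) (y t)) $ k = lk k t \<bullet> e t + 1/2 * (e t \<bullet> (A1 (r t) (axis k 1) *v e t))" for k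
  proof -
    let ?M = "A1 (r t) (axis k 1)"
    have s: "y t \<bullet> (?M *v e t) = e t \<bullet> (?M *v y t)" by (rule inner_sym[OF symA1])
    show ?thesis unfolding gx
      by (simp add: dQ_comp lk_def inner_add_left inner_add_right inner_diff_left matrix_vector_right_distrib s algebra_simps inner_commute[of "e t"])
  qed
  have w: "eps * (mk k t \<bullet> wv t) = - (lk k t \<bullet> e t)" for k
  proof -
    have "eps * (mk k t \<bullet> wv t) = mk k t \<bullet> (eps *\<^sub>R wv t)" by simp
    also have "\<dots> = - (mk k t \<bullet> (Ab t *v e t))" by (simp add: eps_w)
    also have "mk k t \<bullet> (Ab t *v e t) = e t \<bullet> (Ab t *v mk k t)" by (rule symAb)
    finally show ?thesis by (simp add: mk_eq inner_commute)
  qed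
  have "acc t - accs t = (G (r t) - G (rs t)) - (dQdr A b (r t) (x t) - dQdr A b (r t) (y t))"
    using accs_G[OF t] by (simp add: acc_def G_def y_xstar)
  moreover have comp': "dQdr A b (r t) (x t) $ k = dQdr A b (r t) (y t) $ k + (lk k t \<bullet> e t + 1/2 * (e t \<bullet> (A1 (r t) (axis k 1) *v e t)))" for k
    using comp[of k] by simp
  ultimately show ?thesis
    by (simp add: vec_eq_iff comp' g'_def inner_diff_right algebra_simps w)
qed

lemma nlk: assumes t: "t \<in> {0..tf}" shows "norm (lk k t) \<le> L0"
proof -
  have "norm (A1 (r t) (axis k 1)) \<le> MA1" using blin_axis_le BA1 rR[OF t] order.trans by blast
  then have 1: "norm (A1 (r t) (axis k 1) *v y t) \<le> MA1 * Y0"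
    using mv_le ny[OF t] M_nonneg by (meson mult_left_mono order.trans)
  have 2: "norm (b1 (r t) (axis k 1)) \<le> Mb1" using blin_axis_le Bb1 rR[OF t] order.trans by blast
  show ?thesis unfolding lk_def L0_def using 1 2 norm_triangle_ineq4 by (smt (verit))
qed

lemma nmk: "t \<in> {0..tf} \<Longrightarrow> norm (mk k t) \<le> M0"
  unfolding mk_def M0_def using invAb nlk c0 by (meson mult_left_mono order.trans less_imp_le)

lemma nlk': assumes t: "t \<in> {0..tf}" shows "norm (lk' k t) \<le> L1"
proof -
  have "norm (A2 (r t) (p t) (axis k 1)) \<le> MA2 * R * 1"
    by (intro blin_le) (use BA2 rR pR t in auto)
  then have 1: "norm (A2 (r t) (p t) (axis k 1) *v y t) \<le> MA2 * R * Y0"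
    using mv_le ny[OF t] M_nonneg R by (smt (verit) mult_left_mono mult_nonneg_nonneg)
  have "norm (A1 (r t) (axis k 1)) \<le> MA1" using blin_axis_le BA1 rR[OF t] order.trans by blast
  then have 2: "norm (A1 (r t) (axis k 1) *v y1 t) \<le> MA1 * Y1"
    using mv_le ny1[OF t] M_nonneg by (meson mult_left_mono order.trans)
  have 3: "norm (b2 (r t) (p t) (axis k 1)) \<le> Mb2 * R * 1"
    by (intro blin_le) (use Bb2 rR pR t in auto)
  show ?thesis unfolding lk'_def L1_def using 1 2 3 norm_triangle_ineq4 norm_triangle_ineq by (smt (verit))
qed

lemma nmk': assumes t: "t \<in> {0..tf}" shows "norm (mk' k t) \<le> M1"
proof -
  have "norm (A1t t *v mk k t) \<le> MA1 * R * M0"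
    using mv_le[OF nA1t[OF t]] nmk[OF t] M_nonneg R by (smt (verit) mult_left_mono mult_nonneg_nonneg)
  then have "norm (lk' k t - A1t t *v mk k t) \<le> L1 + MA1 * R * M0"
    using nlk'[OF t, of k] norm_triangle_ineq4 by (smt (verit))
  then show ?thesis unfolding mk'_def M1_def using invAb c0 by (meson mult_left_mono order.trans less_imp_le)
qed

lemma ng: assumes t: "t \<in> {0..tf}" shows "norm (g t) \<le> Kg"
  unfolding g_def Kg_def
proof (rule norm_chi_le)
  fix k
  have "\<bar>mk k t \<bullet> ed t\<bar> \<le> norm (mk k t) * norm (ed t)" by (rule Cauchy_Schwarz_ineq2)
  also have "\<dots> \<le> M0 * Kd" using nmk[OF t] ed_bnd[OF t] consts_nonneg2 by (intro mult_mono) auto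
  finally show "\<bar>mk k t \<bullet> ed t\<bar> \<le> M0 * Kd" .
qed

lemma nchi: assumes t: "t \<in> {0..tf}"
  shows "norm (\<chi> k. - 1/2 * (e t \<bullet> (A1 (r t) (axis k 1) *v e t)) - eps * (mk' k t \<bullet> ed t) + eps * (mk k t \<bullet> y2 t)) \<le> Kp * eps"
proof -
  have "norm (\<chi> k. - 1/2 * (e t \<bullet> (A1 (r t) (axis k 1) *v e t)) - eps * (mk' k t \<bullet> ed t) + eps * (mk k t \<bullet> y2 t) :: real^'n)
    \<le> real CARD('n) * (1/2 * MA1 * Ke^2 * eps + eps * (M1 * Kd) + eps * (M0 * Y2))"
  proof (rule norm_chi_le)
    fix k
    have "norm (A1 (r t) (axis k 1)) \<le> MA1" using blin_axis_le BA1 rR[OF t] order.trans by blast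
    then have "\<bar>e t \<bullet> (A1 (r t) (axis k 1) *v e t)\<bar> \<le> norm (e t) * (MA1 * norm (e t))"
      using Cauchy_Schwarz_ineq2[of "e t" "A1 (r t) (axis k 1) *v e t"] mv_le
      by (meson mult_left_mono norm_ge_zero order.trans)
    also have "\<dots> = MA1 * (norm (e t))\<^sup>2" by (simp add: power2_eq_square)
    also have "\<dots> \<le> MA1 * (Ke^2 * eps)" using e_sq[OF t] M_nonneg by (intro mult_left_mono) auto
    finally have 1: "\<bar>1/2 * (e t \<bullet> (A1 (r t) (axis k 1) *v e t))\<bar> \<le> 1/2 * MA1 * Ke^2 * eps" by simp
    have "\<bar>mk' k t \<bullet> ed t\<bar> \<le> M1 * Kd"
      using Cauchy_Schwarz_ineq2[of "mk' k t" "ed t"] nmk'[OF t] ed_bnd[OF t] consts_nonneg2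
      by (meson mult_mono norm_ge_zero order.trans)
    then have 2: "\<bar>eps * (mk' k t \<bullet> ed t)\<bar> \<le> eps * (M1 * Kd)" using eps by (simp add: abs_mult mult_left_mono)
    have "\<bar>mk k t \<bullet> y2 t\<bar> \<le> M0 * Y2"
      using Cauchy_Schwarz_ineq2[of "mk k t" "y2 t"] nmk[OF t] ny2[OF t] consts_nonneg2
      by (meson mult_mono norm_ge_zero order.trans)
    then have 3: "\<bar>eps * (mk k t \<bullet> y2 t)\<bar> \<le> eps * (M0 * Y2)" using eps by (simp add: abs_mult mult_left_mono)
    show "\<bar>- 1/2 * (e t \<bullet> (A1 (r t) (axis k 1) *v e t)) - eps * (mk' k t \<bullet> ed t) + eps * (mk k t \<bullet> y2 t)\<bar>
      \<le> 1/2 * MA1 * Ke^2 * eps + eps * (M1 * Kd) + eps * (M0 * Y2)"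
      using 1 2 3 by linarith
  qed
  also have "\<dots> = Kp * eps" by (simp add: Kp_def algebra_simps)
  finally show ?thesis .
qed

lemma nP': assumes t: "t \<in> {0..tf}"
  shows "norm (acc t - accs t - eps *\<^sub>R g' t) \<le> LG * norm (r t - rs t) + Kp * eps"
  unfolding key_id[OF t] using lipG[OF rR[OF t]] bnds[OF t] nchi[OF t]
  by (smt (verit) norm_triangle_ineq)

lemma d_P: assumes t: "t \<in> {0..tf}" shows "(P has_vector_derivative (acc t - accs t - eps *\<^sub>R g' t)) (at t within {0..tf})"
  unfolding P_def[abs_def]
  using has_vector_derivative_diff[OF has_vector_derivative_diff[OF dp[OF t] dps[OF t]] has_vector_derivative_scaleR[OF DERIV_const d_g[OF t]]]
  by (simp add: acc_def accs_def)

lemma d_V: assumes t: "t \<in> {0..tf}"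
  shows "(V has_real_derivative (2 * ((r t - rs t) \<bullet> (p t - ps t)) + 2 * (P t \<bullet> (acc t - accs t - eps *\<^sub>R g' t)))) (at t within {0..tf})"
proof -
  have dd: "((\<lambda>t. r t - rs t) has_vector_derivative (p t - ps t)) (at t within {0..tf})"
    by (intro has_vector_derivative_diff dr drs t)
  show ?thesis unfolding V_def[abs_def]
    using DERIV_add[OF vd_inner[OF dd dd] vd_inner[OF d_P[OF t] d_P[OF t]]]
    by (rule DERIV_cong) (simp add: inner_commute)
qed

lemma dV_le: assumes t: "t \<in> {0..tf}"
  shows "2 * ((r t - rs t) \<bullet> (p t - ps t)) + 2 * (P t \<bullet> (acc t - accs t - eps *\<^sub>R g' t)) \<le> aV * V t + (Kg^2 + Kp^2) * eps^2"
proof -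
  define nr where "nr = norm (r t - rs t)"
  define nP where "nP = norm (P t)"
  have pp: "p t - ps t = P t + eps *\<^sub>R g t" by (simp add: P_def)
  have V: "V t = nr^2 + nP^2" by (simp add: V_def nr_def nP_def power2_norm_eq_inner)
  have 1: "(r t - rs t) \<bullet> (p t - ps t) \<le> nr * nP + nr * (eps * Kg)"
  proof -
    have "(r t - rs t) \<bullet> (p t - ps t) = (r t - rs t) \<bullet> P t + eps * ((r t - rs t) \<bullet> g t)"
      by (simp add: pp inner_add_right)
    also have "\<dots> \<le> nr * nP + eps * (nr * Kg)"
    proof (intro add_mono mult_left_mono)
      show "(r t - rs t) \<bullet> P t \<le> nr * nP" unfolding nr_def nP_def by (rule norm_cauchy_schwarz)
      have "(r t - rs t) \<bullet> g t \<le> nr * norm (g t)" unfolding nr_def by (rule norm_cauchy_schwarz)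
      also have "\<dots> \<le> nr * Kg" using ng[OF t] by (intro mult_left_mono) (auto simp: nr_def)
      finally show "(r t - rs t) \<bullet> g t \<le> nr * Kg" .
    qed (use eps in auto)
    finally show ?thesis by (simp add: algebra_simps)
  qed
  have 2: "P t \<bullet> (acc t - accs t - eps *\<^sub>R g' t) \<le> nP * (LG * nr + Kp * eps)"
    using norm_cauchy_schwarz[of "P t" "acc t - accs t - eps *\<^sub>R g' t"] nP'[OF t]
    by (smt (verit, best) mult_left_mono norm_ge_zero nP_def nr_def)
  have s1: "2 * nr * nP \<le> nr^2 + nP^2" by (rule sum_squares_bound)
  have s2: "2 * nr * (eps * Kg) \<le> nr^2 + (eps * Kg)^2" by (rule sum_squares_bound)
  have s3: "2 * nP * nr \<le> nP^2 + nr^2" by (rule sum_squares_bound)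
  have s4: "2 * nP * (Kp * eps) \<le> nP^2 + (Kp * eps)^2" by (rule sum_squares_bound)
  have LG: "LG \<ge> 0" by (rule consts_nonneg2)
  have s3': "LG * (2 * nP * nr) \<le> LG * (nP^2 + nr^2)" using s3 LG by (rule mult_left_mono)
  show ?thesis unfolding V aV_def
    using 1 2 s1 s2 s3' s4 by (simp add: algebra_simps power_mult_distrib) 
qed

lemma V_le: assumes t: "t \<in> {0..tf}" shows "V t \<le> KV * eps^2"
proof -
  have "V t \<le> (V 0 + (Kg^2 + Kp^2) * eps^2 / aV) * exp (aV * t)"
    by (rule gronwall[where V'="\<lambda>t. 2 * ((r t - rs t) \<bullet> (p t - ps t)) + 2 * (P t \<bullet> (acc t - accs t - eps *\<^sub>R g' t))"])
       (use consts_nonneg2 eps t d_V dV_le in auto)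
  also have "\<dots> \<le> (eps^2 * Kg^2 + eps^2 * (Kg^2 + Kp^2)) * exp (aV * tf)"
  proof (intro mult_mono)
    have "V 0 = eps^2 * (norm (g 0))^2"
      by (simp add: V_def P_def init power2_norm_eq_inner power_mult_distrib power2_eq_square flip: power2_norm_eq_inner)
    also have "\<dots> \<le> eps^2 * Kg^2"
      using ng[OF t0] by (intro mult_left_mono power_mono) auto
    finally have a: "V 0 \<le> eps^2 * Kg^2" .
    have z: "0 \<le> (Kg^2 + Kp^2) * eps^2" by simp
    have "(Kg^2 + Kp^2) * eps^2 / aV \<le> (Kg^2 + Kp^2) * eps^2 / 1"
      using z consts_nonneg2 by (intro divide_left_mono) auto
    then show "V 0 + (Kg^2 + Kp^2) * eps^2 / aV \<le> eps^2 * Kg^2 + eps^2 * (Kg^2 + Kp^2)"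
      using a by (simp add: algebra_simps)
    show "exp (aV * t) \<le> exp (aV * tf)" using t consts_nonneg2 by (intro exp_mono mult_left_mono) auto
  qed (use eps in auto)
  also have "\<dots> = KV * eps^2" by (simp add: KV_def algebra_simps)
  finally show ?thesis .
qed

lemma r_err: assumes t: "t \<in> {0..tf}" shows "norm (r t - rs t) \<le> sqrt KV * eps"
proof -
  have "(norm (r t - rs t))^2 \<le> KV * eps^2"
    using V_le[OF t] by (simp add: V_def power2_norm_eq_inner) (smt (verit) inner_ge_zero)
  then have "norm (r t - rs t) \<le> sqrt (KV * eps^2)" by (simp add: real_le_rsqrt)
  then show ?thesis using eps by (simp add: real_sqrt_mult)
qed

lemma P_err: assumes t: "t \<in> {0..tf}" shows "norm (P t) \<le> sqrt KV * eps"
proof -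
  have "(norm (P t))^2 \<le> KV * eps^2"
    using V_le[OF t] by (simp add: V_def power2_norm_eq_inner) (smt (verit) inner_ge_zero)
  then have "norm (P t) \<le> sqrt (KV * eps^2)" by (simp add: real_le_rsqrt)
  then show ?thesis using eps by (simp add: real_sqrt_mult)
qed

lemma p_err: assumes t: "t \<in> {0..tf}" shows "norm (p t - ps t) \<le> (sqrt KV + Kg) * eps"
proof -
  have "p t - ps t = P t + eps *\<^sub>R g t" by (simp add: P_def)
  then have "norm (p t - ps t) \<le> norm (P t) + eps * norm (g t)" using eps
    by (metis abs_of_pos norm_scaleR norm_triangle_ineq)
  also have "\<dots> \<le> sqrt KV * eps + eps * Kg" using P_err[OF t] ng[OF t] eps
    by (smt (verit) mult_left_mono)
  finally show ?thesis by (simp add: algebra_simps)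
qed

lemma x_err: assumes t: "t \<in> {0..tf}" shows "norm (x t - xs t) \<le> Ke * sqrt eps + Lx * (sqrt KV * eps)"
proof -
  have "x t - xs t = e t + (xstar (r t) - xstar (rs t))" by (simp add: e_def y_xstar xs_xstar[OF t])
  then have "norm (x t - xs t) \<le> norm (e t) + norm (xstar (r t) - xstar (rs t))" by (metis norm_triangle_ineq)
  also have "\<dots> \<le> Ke * sqrt eps + Lx * (sqrt KV * eps)"
  proof (rule add_mono)
    show "norm (e t) \<le> Ke * sqrt eps" by (rule e_bnd[OF t])
    have "norm (xstar (r t) - xstar (rs t)) \<le> Lx * norm (r t - rs t)" using lipx rR[OF t] bnds[OF t] by blast
    also have "\<dots> \<le> Lx * (sqrt KV * eps)" using r_err[OF t] consts_nonneg2 by (intro mult_left_mono) auto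
    finally show "norm (xstar (r t) - xstar (rs t)) \<le> Lx * (sqrt KV * eps)" .
  qed
  finally show ?thesis .
qed

lemma d_Mk: "t \<in> {0..tf} \<Longrightarrow> ((\<lambda>t. A1 (r t) (axis k 1)) has_vector_derivative A2 (r t) (p t) (axis k 1)) (at t within {0..tf})"
  using vd_blin[OF d_A1 has_vector_derivative_const[of "axis k 1"]] by simp
lemma d_bk: "t \<in> {0..tf} \<Longrightarrow> ((\<lambda>t. b1 (r t) (axis k 1)) has_vector_derivative b2 (r t) (p t) (axis k 1)) (at t within {0..tf})"
  using vd_blin[OF d_b1 has_vector_derivative_const[of "axis k 1"]] by simp

definition "acd t = F1 (r t) (p t) - (\<chi> k. 1/2 * (x t \<bullet> (A1 (r t) (axis k 1) *v v t + A2 (r t) (p t) (axis k 1) *v x t)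
     + v t \<bullet> (A1 (r t) (axis k 1) *v x t)) - (b1 (r t) (axis k 1) \<bullet> v t + b2 (r t) (p t) (axis k 1) \<bullet> x t))"

lemma d_acc: assumes t: "t \<in> {0..tf}" shows "(acc has_vector_derivative acd t) (at t within {0..tf})"
proof -
  have eq: "acc s = F (r s) - (\<chi> k. 1/2 * (x s \<bullet> (A1 (r s) (axis k 1) *v x s)) - b1 (r s) (axis k 1) \<bullet> x s)" for s
    by (simp add: acc_def vec_eq_iff dQ_comp)
  have "((\<lambda>s. \<chi> k. 1/2 * (x s \<bullet> (A1 (r s) (axis k 1) *v x s)) - b1 (r s) (axis k 1) \<bullet> x s) has_vector_derivative
     (\<chi> k. 1/2 * (x t \<bullet> (A1 (r t) (axis k 1) *v v t + A2 (r t) (p t) (axis k 1) *v x t)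
     + v t \<bullet> (A1 (r t) (axis k 1) *v x t)) - (b1 (r t) (axis k 1) \<bullet> v t + b2 (r t) (p t) (axis k 1) \<bullet> x t))) (at t within {0..tf})"
  proof (rule vd_vec_lambda)
    fix k
    show "((\<lambda>s. 1/2 * (x s \<bullet> (A1 (r s) (axis k 1) *v x s)) - b1 (r s) (axis k 1) \<bullet> x s) has_real_derivative
      1/2 * (x t \<bullet> (A1 (r t) (axis k 1) *v v t + A2 (r t) (p t) (axis k 1) *v x t)
     + v t \<bullet> (A1 (r t) (axis k 1) *v x t)) - (b1 (r t) (axis k 1) \<bullet> v t + b2 (r t) (p t) (axis k 1) \<bullet> x t)) (at t within {0..tf})"
      by (intro DERIV_diff DERIV_cmult vd_inner vd_mv dx d_Mk d_bk t)
  qed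
  then show ?thesis unfolding eq[abs_def] acd_def
    by (intro has_vector_derivative_diff vd_chain[OF dF dr[OF t]])
qed

lemma nv: "t \<in> {0..tf} \<Longrightarrow> norm (v t) \<le> Vb"
proof -
  assume t: "t \<in> {0..tf}"
  have "v t = ed t + y1 t" by (simp add: ed_def)
  then have "norm (v t) \<le> norm (ed t) + norm (y1 t)" by (metis norm_triangle_ineq)
  then show ?thesis unfolding Vb_def using ed_bnd[OF t] ny1[OF t] by linarith
qed

lemma nacd: assumes t: "t \<in> {0..tf}" shows "norm (acd t) \<le> Ka"
proof -
  have rr: "norm (r t) \<le> R" "norm (p t) \<le> R" "norm (x t) \<le> R" "norm (v t) \<le> Vb"
    using rR pR xR nv t by auto
  have 1: "norm (F1 (r t) (p t)) \<le> MF1 * R" using blin_le BF1 rr by blast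
  have 2: "norm (\<chi> k. 1/2 * (x t \<bullet> (A1 (r t) (axis k 1) *v v t + A2 (r t) (p t) (axis k 1) *v x t)
     + v t \<bullet> (A1 (r t) (axis k 1) *v x t)) - (b1 (r t) (axis k 1) \<bullet> v t + b2 (r t) (p t) (axis k 1) \<bullet> x t) :: real^'n)
     \<le> real CARD('n) * (1/2 * (R * (MA1 * Vb + MA2 * R * R) + Vb * (MA1 * R)) + (Mb1 * Vb + Mb2 * R * R))"
  proof (rule norm_chi_le)
    fix k
    have M: "norm (A1 (r t) (axis k 1)) \<le> MA1" using blin_axis_le BA1 rr order.trans by blast
    have M': "norm (A2 (r t) (p t) (axis k 1)) \<le> MA2 * R * 1" by (intro blin_le) (use BA2 rr in auto)
    have B: "norm (b1 (r t) (axis k 1)) \<le> Mb1" using blin_axis_le Bb1 rr order.trans by blast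
    have B': "norm (b2 (r t) (p t) (axis k 1)) \<le> Mb2 * R * 1" by (intro blin_le) (use Bb2 rr in auto)
    have a1: "norm (A1 (r t) (axis k 1) *v v t) \<le> MA1 * Vb" using mv_le[OF M] rr M_nonneg by (meson mult_left_mono order.trans)
    have a2: "norm (A2 (r t) (p t) (axis k 1) *v x t) \<le> MA2 * R * R" using mv_le[OF M', of "x t"] rr M_nonneg R
      by (smt (verit) mult_left_mono mult_nonneg_nonneg)
    have a3: "norm (A1 (r t) (axis k 1) *v x t) \<le> MA1 * R" using mv_le[OF M] rr M_nonneg by (meson mult_left_mono order.trans)
    have i1: "\<bar>x t \<bullet> (A1 (r t) (axis k 1) *v v t + A2 (r t) (p t) (axis k 1) *v x t)\<bar> \<le> R * (MA1 * Vb + MA2 * R * R)"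
      using Cauchy_Schwarz_ineq2[of "x t"] norm_triangle_ineq[of "A1 (r t) (axis k 1) *v v t" "A2 (r t) (p t) (axis k 1) *v x t"] a1 a2 rr
      by (smt (verit) mult_mono norm_ge_zero)
    have i2: "\<bar>v t \<bullet> (A1 (r t) (axis k 1) *v x t)\<bar> \<le> Vb * (MA1 * R)"
      using Cauchy_Schwarz_ineq2[of "v t"] a3 rr by (smt (verit) mult_mono norm_ge_zero)
    have i3: "\<bar>b1 (r t) (axis k 1) \<bullet> v t\<bar> \<le> Mb1 * Vb"
      using Cauchy_Schwarz_ineq2[of "b1 (r t) (axis k 1)" "v t"] B rr by (smt (verit) mult_mono norm_ge_zero)
    have i4: "\<bar>b2 (r t) (p t) (axis k 1) \<bullet> x t\<bar> \<le> Mb2 * R * R"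
      using Cauchy_Schwarz_ineq2[of "b2 (r t) (p t) (axis k 1)" "x t"] B' rr by (smt (verit) mult_mono norm_ge_zero)
    show "\<bar>1/2 * (x t \<bullet> (A1 (r t) (axis k 1) *v v t + A2 (r t) (p t) (axis k 1) *v x t)
     + v t \<bullet> (A1 (r t) (axis k 1) *v x t)) - (b1 (r t) (axis k 1) \<bullet> v t + b2 (r t) (p t) (axis k 1) \<bullet> x t)\<bar>
     \<le> 1/2 * (R * (MA1 * Vb + MA2 * R * R) + Vb * (MA1 * R)) + (Mb1 * Vb + Mb2 * R * R)"
      by (rule abs4[OF i1 i2 i3 i4])
  qed
  show ?thesis unfolding acd_def Ka_def using 1 2 norm_triangle_ineq4 by (smt (verit))
qed

lemma dp': "t \<in> {0..tf} \<Longrightarrow> (p has_vector_derivative acc t) (at t within {0..tf})"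
  using dp by (simp add: acc_def)

definition "A3t t = (A2 (r t) (p t) (acc t) + (A2 (r t) (acc t) + A3 (r t) (p t) (p t)) (p t)) + (A1 (r t) (acd t) + A2 (r t) (p t) (acc t))"
definition "b3t t = (b2 (r t) (p t) (acc t) + (b2 (r t) (acc t) + b3 (r t) (p t) (p t)) (p t)) + (b1 (r t) (acd t) + b2 (r t) (p t) (acc t))"

lemma d_A2t: assumes t: "t \<in> {0..tf}" shows "(A2t has_vector_derivative A3t t) (at t within {0..tf})"
proof -
  have 1: "((\<lambda>t. A2 (r t)) has_vector_derivative A3 (r t) (p t)) (at t within {0..tf})" by (rule vd_chain[OF dA2 dr[OF t]])
  have 2: "((\<lambda>t. A2 (r t) (p t)) has_vector_derivative (A2 (r t) (acc t) + A3 (r t) (p t) (p t))) (at t within {0..tf})"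
    by (rule vd_blin[OF 1 dp'[OF t]])
  have 3: "((\<lambda>t. A2 (r t) (p t) (p t)) has_vector_derivative (A2 (r t) (p t) (acc t) + (A2 (r t) (acc t) + A3 (r t) (p t) (p t)) (p t))) (at t within {0..tf})"
    by (rule vd_blin[OF 2 dp'[OF t]])
  have 4: "((\<lambda>t. A1 (r t) (acc t)) has_vector_derivative (A1 (r t) (acd t) + A2 (r t) (p t) (acc t))) (at t within {0..tf})"
    by (rule vd_blin[OF d_A1[OF t] d_acc[OF t]])
  show ?thesis unfolding A2t_def[abs_def] A3t_def by (rule has_vector_derivative_add[OF 3 4])
qed

lemma d_b2t: assumes t: "t \<in> {0..tf}" shows "(b2t has_vector_derivative b3t t) (at t within {0..tf})"
proof -
  have 1: "((\<lambda>t. b2 (r t)) has_vector_derivative b3 (r t) (p t)) (at t within {0..tf})" by (rule vd_chain[OF db2 dr[OF t]])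
  have 2: "((\<lambda>t. b2 (r t) (p t)) has_vector_derivative (b2 (r t) (acc t) + b3 (r t) (p t) (p t))) (at t within {0..tf})"
    by (rule vd_blin[OF 1 dp'[OF t]])
  have 3: "((\<lambda>t. b2 (r t) (p t) (p t)) has_vector_derivative (b2 (r t) (p t) (acc t) + (b2 (r t) (acc t) + b3 (r t) (p t) (p t)) (p t))) (at t within {0..tf})"
    by (rule vd_blin[OF 2 dp'[OF t]])
  have 4: "((\<lambda>t. b1 (r t) (acc t)) has_vector_derivative (b1 (r t) (acd t) + b2 (r t) (p t) (acc t))) (at t within {0..tf})"
    by (rule vd_blin[OF d_b1[OF t] d_acc[OF t]])
  show ?thesis unfolding b2t_def[abs_def] b3t_def by (rule has_vector_derivative_add[OF 3 4])
qed

lemma blin_sum_le: "norm f1 \<le> K1 \<Longrightarrow> norm f2 \<le> K2 \<Longrightarrow> norm h1 \<le> H \<Longrightarrow> H \<ge> 0 \<Longrightarrow> norm (blinfun_apply (f1 + f2) h1) \<le> (K1 + K2) * H"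
  by (rule blin_le) (auto intro: order.trans[OF norm_triangle_ineq])

lemma nA3t: assumes t: "t \<in> {0..tf}" shows "norm (A3t t) \<le> NA3"
proof -
  have rr: "norm (r t) \<le> R" "norm (p t) \<le> R" "norm (acc t) \<le> R" "norm (acd t) \<le> Ka"
    using rR pR aR nacd t by auto
  have 1: "norm (A2 (r t) (p t) (acc t)) \<le> MA2 * R * R" by (intro blin_le) (use BA2 rr in auto)
  have 2: "norm ((A2 (r t) (acc t) + A3 (r t) (p t) (p t)) (p t)) \<le> (MA2 * R + MA3 * R * R) * R"
    by (intro blin_sum_le blin_le) (use BA2 BA3 rr R in auto)
  have 3: "norm (A1 (r t) (acd t)) \<le> MA1 * Ka" by (intro blin_le) (use BA1 rr in auto)
  have 4: "norm (A2 (r t) (p t) (acc t)) \<le> MA2 * R * R" by (intro blin_le) (use BA2 rr in auto)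
  show ?thesis unfolding A3t_def NA3_def using 1 2 3 4 norm_triangle_ineq
    by (smt (verit) distrib_right)
qed

lemma nb3t: assumes t: "t \<in> {0..tf}" shows "norm (b3t t) \<le> NB3"
proof -
  have rr: "norm (r t) \<le> R" "norm (p t) \<le> R" "norm (acc t) \<le> R" "norm (acd t) \<le> Ka"
    using rR pR aR nacd t by auto
  have 1: "norm (b2 (r t) (p t) (acc t)) \<le> Mb2 * R * R" by (intro blin_le) (use Bb2 rr in auto)
  have 2: "norm ((b2 (r t) (acc t) + b3 (r t) (p t) (p t)) (p t)) \<le> (Mb2 * R + Mb3 * R * R) * R"
    by (intro blin_sum_le blin_le) (use Bb2 Bb3 rr R in auto)
  have 3: "norm (b1 (r t) (acd t)) \<le> Mb1 * Ka" by (intro blin_le) (use Bb1 rr in auto)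
  have 4: "norm (b2 (r t) (p t) (acc t)) \<le> Mb2 * R * R" by (intro blin_le) (use Bb2 rr in auto)
  show ?thesis unfolding b3t_def NB3_def using 1 2 3 4 norm_triangle_ineq
    by (smt (verit) distrib_right)
qed

definition "c2' t = b3t t - (A2t t *v y1 t + A3t t *v y t) - 2 *\<^sub>R (A1t t *v y2 t + A2t t *v y1 t)"
definition "y3 t = matrix_inv (Ab t) *v (c2' t - A1t t *v y2 t)"

lemma d_y2: assumes t: "t \<in> {0..tf}" shows "(y2 has_vector_derivative y3 t) (at t within {0..tf})"
proof (rule vd_solve[OF _ t coerAb d_Ab[OF t]])
  show "\<forall>s\<in>{0..tf}. Ab s *v y2 s = b2t s - A2t s *v y s - 2 *\<^sub>R (A1t s *v y1 s)" using y2_eq by blast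
  show "((\<lambda>s. b2t s - A2t s *v y s - 2 *\<^sub>R (A1t s *v y1 s)) has_vector_derivative c2' t) (at t within {0..tf})"
    unfolding c2'_def
    using has_vector_derivative_diff[OF has_vector_derivative_diff[OF d_b2t[OF t] vd_mv[OF d_A2t[OF t] d_y[OF t]]]
       has_vector_derivative_scaleR[OF DERIV_const vd_mv[OF d_A1t[OF t] d_y1[OF t]]]]
    by (simp add: add.commute)
  show "Ab t *v y3 t = c2' t - A1t t *v y2 t" unfolding y3_def Ab_def by (rule inv_eq)
qed

lemma ny3: assumes t: "t \<in> {0..tf}" shows "norm (y3 t) \<le> Y3"
proof -
  have A1: "norm (A1t t *v u) \<le> MA1 * R * norm u" for u using mv_le[OF nA1t[OF t]] .
  have A2: "norm (A2t t *v u) \<le> NA2 * norm u" for u using mv_le nA2t[OF t] NA2_def by metis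
  have A3: "norm (A3t t *v u) \<le> NA3 * norm u" for u using mv_le nA3t[OF t] by metis
  have K: "MA1 * R \<ge> 0" "NA2 \<ge> 0" "NA3 \<ge> 0" using M_nonneg R consts_nonneg3 by auto
  have e1: "norm (A2t t *v y1 t) \<le> NA2 * Y1" using A2[of "y1 t"] ny1[OF t] K by (smt (verit) mult_left_mono)
  have e2: "norm (A3t t *v y t) \<le> NA3 * Y0" using A3[of "y t"] ny[OF t] K by (smt (verit) mult_left_mono)
  have e3: "norm (A1t t *v y2 t) \<le> MA1 * R * Y2" using A1[of "y2 t"] ny2[OF t] K by (smt (verit) mult_left_mono)
  have "norm (c2' t - A1t t *v y2 t) \<le> NB3 + (NA2 * Y1 + NA3 * Y0) + 2 * (MA1 * R * Y2 + NA2 * Y1) + MA1 * R * Y2"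
  proof -
    have "norm (c2' t - A1t t *v y2 t) \<le> norm (b3t t) + norm (A2t t *v y1 t + A3t t *v y t)
        + norm (2 *\<^sub>R (A1t t *v y2 t + A2t t *v y1 t)) + norm (A1t t *v y2 t)"
      unfolding c2'_def by (smt (verit) norm3 norm_triangle_ineq4)
    also have "\<dots> \<le> NB3 + (NA2 * Y1 + NA3 * Y0) + 2 * (MA1 * R * Y2 + NA2 * Y1) + MA1 * R * Y2"
      using nb3t[OF t] e1 e2 e3 norm_triangle_ineq[of "A2t t *v y1 t" "A3t t *v y t"]
        norm_triangle_ineq[of "A1t t *v y2 t" "A2t t *v y1 t"] by simp
    finally show ?thesis .
  qed
  then show ?thesis unfolding y3_def Y3_def using invAb c0 by (meson mult_left_mono order.trans less_imp_le)
qed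

definition "Et t = En t + eps * (e t \<bullet> y2 t)"
definition "Wf t = Et t + c0 * eps^2 * Y2^2"

lemma d_Wf: assumes t: "t \<in> {0..tf}"
  shows "(Wf has_real_derivative (1/2 * (e t \<bullet> (A1t t *v e t)) + eps * (e t \<bullet> y3 t))) (at t within {0..tf})"
proof -
  have "(Wf has_real_derivative ((- eps * (ed t \<bullet> y2 t) + 1/2 * (e t \<bullet> (A1t t *v e t))) + eps * (e t \<bullet> y3 t + ed t \<bullet> y2 t)) + 0) (at t within {0..tf})"
    unfolding Wf_def[abs_def] Et_def[abs_def]
    by (intro DERIV_add DERIV_cmult d_En[OF t] vd_inner[OF d_e[OF t] d_y2[OF t]] DERIV_const)
  then show ?thesis by (rule DERIV_cong) (simp add: algebra_simps)
qed

lemma e_sq_En: "(norm (e t))\<^sup>2 \<le> 2 * c0 * En t"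
proof -
  have "c0 * (e t \<bullet> (Ab t *v e t)) \<le> c0 * (2 * En t)" using En_bounds(2)[of t] c0 by (intro mult_left_mono) auto
  then show ?thesis using eAe[of t] by simp
qed

lemma W_ge: assumes t: "t \<in> {0..tf}" shows "En t \<le> 2 * Wf t"
proof -
  define n where "n = norm (e t)"
  define \<beta> where "\<beta> = eps * Y2"
  have "0 \<le> (n - 2 * c0 * \<beta>)^2" by simp
  then have "4 * c0 * (\<beta> * n) \<le> n^2 + 4 * c0^2 * \<beta>^2" by (simp add: power2_eq_square algebra_simps)
  then have 1: "\<beta> * n \<le> n^2 / (4 * c0) + c0 * \<beta>^2" using c0 by (simp add: field_simps power2_eq_square)
  have 2: "n^2 / (4 * c0) \<le> En t / 2" using e_sq_En[of t] c0 unfolding n_def by (simp add: field_simps)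
  have 3: "\<bar>eps * (e t \<bullet> y2 t)\<bar> \<le> \<beta> * n"
  proof -
    have "\<bar>e t \<bullet> y2 t\<bar> \<le> n * Y2" unfolding n_def
      using Cauchy_Schwarz_ineq2[of "e t" "y2 t"] ny2[OF t] by (meson mult_left_mono norm_ge_zero order.trans)
    then show ?thesis using eps by (simp add: abs_mult \<beta>_def algebra_simps mult_left_mono)
  qed
  show ?thesis using 1 2 3 unfolding Wf_def Et_def \<beta>_def by (simp add: power_mult_distrib)
qed

lemma dW_le: assumes t: "t \<in> {0..tf}"
  shows "1/2 * (e t \<bullet> (A1t t *v e t)) + eps * (e t \<bullet> y3 t) \<le> aW * Wf t + eps^2 * Y3^2 / 2"
proof -
  define n where "n = norm (e t)"
  have 1: "e t \<bullet> (A1t t *v e t) \<le> MA1 * R * n^2"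
  proof -
    have "e t \<bullet> (A1t t *v e t) \<le> n * (MA1 * R * n)" unfolding n_def
      using Cauchy_Schwarz_ineq2[of "e t" "A1t t *v e t"] mv_le[OF nA1t[OF t], of "e t"]
      by (meson abs_le_D1 mult_left_mono norm_ge_zero order.trans)
    then show ?thesis by (simp add: power2_eq_square algebra_simps)
  qed
  have 2: "eps * (e t \<bullet> y3 t) \<le> n^2 / 2 + eps^2 * Y3^2 / 2"
  proof -
    have "e t \<bullet> y3 t \<le> n * Y3" unfolding n_def
      using Cauchy_Schwarz_ineq2[of "e t" "y3 t"] ny3[OF t] by (meson abs_le_D1 mult_left_mono norm_ge_zero order.trans)
    then have "eps * (e t \<bullet> y3 t) \<le> eps * (n * Y3)" using eps by (intro mult_left_mono) auto
    moreover have "2 * n * (eps * Y3) \<le> n^2 + (eps * Y3)^2" by (rule sum_squares_bound)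
    ultimately show ?thesis by (simp add: power_mult_distrib algebra_simps)
  qed
  have 3: "n^2 \<le> 2 * c0 * En t" unfolding n_def by (rule e_sq_En)
  have 4: "En t \<le> 2 * Wf t" by (rule W_ge[OF t])
  have K: "MA1 * R + 1 \<ge> 0" using M_nonneg R by simp
  have A: "1/2 * (e t \<bullet> (A1t t *v e t)) + eps * (e t \<bullet> y3 t) \<le> (MA1 * R + 1) * n^2 / 2 + eps^2 * Y3^2 / 2"
  proof -
    have "(MA1 * R + 1) * n^2 / 2 = (MA1 * R * n^2) / 2 + n^2 / 2" by (simp add: algebra_simps)
    then show ?thesis using 1 2 by linarith
  qed
  have B: "(MA1 * R + 1) * n^2 \<le> (MA1 * R + 1) * (2 * c0 * En t)" using 3 K by (rule mult_left_mono)
  have C: "(MA1 * R + 1) * (2 * c0 * En t) \<le> (MA1 * R + 1) * (2 * c0 * (2 * Wf t))"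
    using 4 K c0 by (intro mult_left_mono) auto
  have D: "(MA1 * R + 1) * (2 * c0 * (2 * Wf t)) / 2 = aW * Wf t" by (simp add: aW_def algebra_simps)
  show ?thesis using A B C D by linarith
qed

lemma W_le: assumes t: "t \<in> {0..tf}" and ed0: "ed 0 = 0" shows "Wf t \<le> KW * eps^2"
proof -
  have "Wf t \<le> (Wf 0 + eps^2 * Y3^2 / 2 / aW) * exp (aW * t)"
  proof (rule gronwall[where V'="\<lambda>t. 1/2 * (e t \<bullet> (A1t t *v e t)) + eps * (e t \<bullet> y3 t)"])
    show "aW > 0" by (rule consts_nonneg3(7))
    show "eps^2 * Y3^2 / 2 \<ge> 0" by simp
    show "\<forall>s\<in>{0..tf}. (Wf has_real_derivative 1/2 * (e s \<bullet> (A1t s *v e s)) + eps * (e s \<bullet> y3 s)) (at s within {0..tf})"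
      using d_Wf by blast
    show "\<forall>s\<in>{0..tf}. 1/2 * (e s \<bullet> (A1t s *v e s)) + eps * (e s \<bullet> y3 s) \<le> aW * Wf s + eps^2 * Y3^2 / 2"
      using dW_le by blast
  qed (rule t)
  also have "Wf 0 = c0 * eps^2 * Y2^2" by (simp add: Wf_def Et_def En_def e0 ed0)
  also have "(c0 * eps^2 * Y2^2 + eps^2 * Y3^2 / 2 / aW) * exp (aW * t) \<le> (c0 * eps^2 * Y2^2 + eps^2 * Y3^2 / 2 / aW) * exp (aW * tf)"
    using t consts_nonneg3 c0 by (intro mult_left_mono exp_mono mult_left_mono) auto
  also have "\<dots> = KW * eps^2" by (simp add: KW_def algebra_simps)
  finally show ?thesis .
qed

lemma e_bnd2: assumes t: "t \<in> {0..tf}" and ed0: "ed 0 = 0" shows "norm (e t) \<le> Ke2 * eps"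
proof -
  have "(norm (e t))^2 \<le> 4 * c0 * KW * eps^2"
  proof -
    have "En t \<le> 2 * (KW * eps^2)" using W_ge[OF t] W_le[OF t ed0] by linarith
    then have "2 * c0 * En t \<le> 2 * c0 * (2 * (KW * eps^2))" using c0 by (intro mult_left_mono) auto
    then show ?thesis using e_sq_En[of t] by (simp add: algebra_simps)
  qed
  then have "norm (e t) \<le> sqrt (4 * c0 * KW * eps^2)" by (simp add: real_le_rsqrt)
  then show ?thesis using eps by (simp add: Ke2_def real_sqrt_mult)
qed

lemma x_err2: assumes t: "t \<in> {0..tf}" and ed0: "v 0 = y1 0" shows "norm (x t - xs t) \<le> Ke2 * eps + Lx * (sqrt KV * eps)"
proof -
  have ed0': "ed 0 = 0" using ed0 by (simp add: ed_def)
  have "x t - xs t = e t + (xstar (r t) - xstar (rs t))" by (simp add: e_def y_xstar xs_xstar[OF t])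
  then have "norm (x t - xs t) \<le> norm (e t) + norm (xstar (r t) - xstar (rs t))" by (metis norm_triangle_ineq)
  also have "\<dots> \<le> Ke2 * eps + Lx * (sqrt KV * eps)"
  proof (rule add_mono)
    show "norm (e t) \<le> Ke2 * eps" by (rule e_bnd2[OF t ed0'])
    have "norm (xstar (r t) - xstar (rs t)) \<le> Lx * norm (r t - rs t)" using lipx rR[OF t] bnds[OF t] by blast
    also have "\<dots> \<le> Lx * (sqrt KV * eps)" using r_err[OF t] consts_nonneg2 by (intro mult_left_mono) auto
    finally show "norm (xstar (r t) - xstar (rs t)) \<le> Lx * (sqrt KV * eps)" .
  qed
  finally show ?thesis .
qed

end



lemma (in base) formula_eq:
  "- (matrix_inv (A r) ** (\<Sum>k\<in>UNIV. (q $ k) *\<^sub>R partial A r k) ** matrix_inv (A r)) *v b r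
   + matrix_inv (A r) *v (\<Sum>k\<in>UNIV. (q $ k) *\<^sub>R partial b r k)
   = matrix_inv (A r) *v (b1 r q - A1 r q *v xstar r)"
proof -
  have S: "(\<Sum>k\<in>UNIV. (q $ k) *\<^sub>R partial A r k) = A1 r q"
  proof -
    have "(\<Sum>k\<in>UNIV. (q $ k) *\<^sub>R partial A r k) = A1 r (\<Sum>k\<in>UNIV. (q $ k) *\<^sub>R axis k 1)"
      by (simp add: partialA blinfun.sum_right blinfun.scaleR_right)
    then show ?thesis by (simp add: sum_axis_eq)
  qed
  have Sb: "(\<Sum>k\<in>UNIV. (q $ k) *\<^sub>R partial b r k) = b1 r q"
  proof -
    have "(\<Sum>k\<in>UNIV. (q $ k) *\<^sub>R partial b r k) = b1 r (\<Sum>k\<in>UNIV. (q $ k) *\<^sub>R axis k 1)"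
      by (simp add: partialb blinfun.sum_right blinfun.scaleR_right)
    then show ?thesis by (simp add: sum_axis_eq)
  qed
  have neg: "(- M) *v z = - (M *v z)" for M :: "real^'m^'m" and z
    by (rule bounded_bilinear.minus_left[OF bounded_bilinear_mv])
  show ?thesis unfolding S Sb xstar_def neg
    by (simp add: matrix_vector_mul_assoc[symmetric] matrix_vector_mult_diff_distrib)
qed

lemma cont_of_deriv: "(\<And>y. (f has_derivative f' y) (at y)) \<Longrightarrow> continuous_on UNIV f"
  by (meson continuous_at_imp_continuous_on has_derivative_continuous)

lemma eps_le_sqrt: "0 < (eps::real) \<Longrightarrow> eps \<le> 1 \<Longrightarrow> eps \<le> sqrt eps"
proof -
  assume e: "0 < eps" "eps \<le> 1"
  have "sqrt eps \<le> 1" using e by simp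
  then have "sqrt eps * sqrt eps \<le> sqrt eps * 1" using e by (intro mult_left_mono) auto
  then show ?thesis using e by simp
qed

theorem theorem2p4:
  fixes F :: "real^'n \<Rightarrow> real^'n"
    and A :: "real^'n \<Rightarrow> real^'m^'m"
    and b :: "real^'n \<Rightarrow> real^'m"
    and tf :: real
    and rs ps :: "real \<Rightarrow> real^'n" and xs :: "real \<Rightarrow> real^'m"
    and re pe :: "real \<Rightarrow> real \<Rightarrow> real^'n" and xe xde :: "real \<Rightarrow> real \<Rightarrow> real^'m"
  assumes tf_pos: "tf > 0"
    and A_spd: "\<forall>r. transpose (A r) = A r \<and> (\<forall>v. v \<noteq> 0 \<longrightarrow> v \<bullet> (A r *v v) > 0)"
    and A_C3: "C3_on UNIV A"
    and A_coercive: "\<exists>C>0. \<forall>r v. v \<bullet> (A r *v v) \<ge> (1/C) * (norm v)\<^sup>2"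
    and b_C3: "C3_on UNIV b"
    and F_C2: "C2_on UNIV F"
    and exact: "exact_sol F A b tf rs ps xs"
    and xlmd: "\<forall>eps>0. xlmd_sol F A b tf eps (re eps) (pe eps) (xe eps) (xde eps)"
    and init_bdd: "\<exists>B. \<forall>eps>0. norm (rs 0) \<le> B \<and> norm (ps 0) \<le> B \<and>
                      norm (re eps 0) \<le> B \<and> norm (pe eps 0) \<le> B \<and>
                      norm (xe eps 0) \<le> B \<and> norm (xde eps 0) \<le> B"
    and init_eq: "\<forall>eps>0. re eps 0 = rs 0 \<and> pe eps 0 = ps 0"
    and exact_unique: "\<forall>r p x. exact_sol F A b tf r p x \<and> r 0 = rs 0 \<and> p 0 = ps 0 \<longrightarrow>
                          (\<forall>t\<in>{0..tf}. r t = rs t \<and> p t = ps t \<and> x t = xs t)"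
    and xlmd_unique: "\<forall>eps>0. \<forall>r p x xd. xlmd_sol F A b tf eps r p x xd \<and>
                          r 0 = re eps 0 \<and> p 0 = pe eps 0 \<and> x 0 = xe eps 0 \<and> xd 0 = xde eps 0 \<longrightarrow>
                          (\<forall>t\<in>{0..tf}. r t = re eps t \<and> p t = pe eps t \<and> x t = xe eps t \<and> xd t = xde eps t)"
    and rs_C3: "C3_on {0..tf} rs"
    and re_C3: "\<forall>eps>0. C3_on {0..tf} (re eps)"
    and xe_C3: "\<forall>eps>0. C3_on {0..tf} (xe eps)"
    and sol_bdd: "\<exists>C. \<forall>t\<in>{0..tf}.
          norm (rs t) \<le> C \<and> norm (ps t) \<le> C \<and> norm (F (rs t) - dQdr A b (rs t) (xs t)) \<le> C \<and>
          (\<forall>eps>0. norm (re eps t) \<le> C \<and> norm (pe eps t) \<le> C \<and>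
                   norm (F (re eps t) - dQdr A b (re eps t) (xe eps t)) \<le> C \<and>
                   norm (xe eps t) \<le> C \<and> sqrt eps * norm (xde eps t) \<le> C)"
    and compat: "\<forall>eps>0. xe eps 0 = matrix_inv (A (rs 0)) *v b (rs 0)"
  shows "(\<exists>C>0. \<forall>eps>0. \<forall>t\<in>{0..tf}.
             norm (re eps t - rs t) \<le> C * sqrt eps \<and>
             norm (pe eps t - ps t) \<le> C * sqrt eps \<and>
             norm (xe eps t - xs t) \<le> C * sqrt eps)
       \<and> (CARD('m) = 1 \<longrightarrow>
            (\<exists>C>0. \<forall>eps>0. \<forall>t\<in>{0..tf}.
                norm (re eps t - rs t) \<le> C * eps \<and> norm (pe eps t - ps t) \<le> C * eps)
          \<and> ((\<forall>eps>0. xde eps 0 =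
                 - (matrix_inv (A (rs 0)) ** (\<Sum>k\<in>UNIV. (ps 0 $ k) *\<^sub>R partial A (rs 0) k)
                     ** matrix_inv (A (rs 0))) *v b (rs 0)
                 + matrix_inv (A (rs 0)) *v (\<Sum>k\<in>UNIV. (ps 0 $ k) *\<^sub>R partial b (rs 0) k))
             \<longrightarrow> (\<exists>C>0. \<forall>eps>0. \<forall>t\<in>{0..tf}. norm (xe eps t - xs t) \<le> C * eps)))"

proof -
  obtain A1 where dA: "\<And>y. (A has_derivative blinfun_apply (A1 y)) (at y)" and A1C: "C2_on UNIV A1"
    using A_C3 unfolding C3_on_def by auto
  obtain A2 where dA1: "\<And>y. (A1 has_derivative blinfun_apply (A2 y)) (at y)" and A2C: "C1_on UNIV A2"
    using A1C unfolding C2_on_def by auto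
  obtain A3 where dA2: "\<And>y. (A2 has_derivative blinfun_apply (A3 y)) (at y)" and A3c: "continuous_on UNIV A3"
    using A2C unfolding C1_on_def by auto
  obtain b1 where db: "\<And>y. (b has_derivative blinfun_apply (b1 y)) (at y)" and b1C: "C2_on UNIV b1"
    using b_C3 unfolding C3_on_def by auto
  obtain b2 where db1: "\<And>y. (b1 has_derivative blinfun_apply (b2 y)) (at y)" and b2C: "C1_on UNIV b2"
    using b1C unfolding C2_on_def by auto
  obtain b3 where db2: "\<And>y. (b2 has_derivative blinfun_apply (b3 y)) (at y)" and b3c: "continuous_on UNIV b3"
    using b2C unfolding C1_on_def by auto
  obtain F1 where dF: "\<And>y. (F has_derivative blinfun_apply (F1 y)) (at y)" and F1C: "C1_on UNIV F1"
    using F_C2 unfolding C2_on_def by auto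
  obtain F2 where dF1: "\<And>y. (F1 has_derivative blinfun_apply (F2 y)) (at y)"
    using F1C unfolding C1_on_def by auto
  obtain C0 where C0: "C0 > 0" and C0c: "\<And>r v. v \<bullet> (A r *v v) \<ge> (1/C0) * (norm v)\<^sup>2"
    using A_coercive by auto
  have coer2: "(norm u)\<^sup>2 \<le> C0 * (u \<bullet> (A r *v u))" for r u
  proof -
    have "C0 * ((1/C0) * (norm u)\<^sup>2) \<le> C0 * (u \<bullet> (A r *v u))" using C0 C0c by (intro mult_left_mono) auto
    then show ?thesis using C0 by simp
  qed
  have coer: "norm u \<le> C0 * norm (A r *v u)" for r u
  proof (cases "u = 0")
    case False
    have "(norm u)\<^sup>2 \<le> C0 * (norm u * norm (A r *v u))"
      using coer2[of u r] norm_cauchy_schwarz[of u "A r *v u"] C0 by (smt (verit) mult_left_mono)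
    then have "norm u * norm u \<le> norm u * (C0 * norm (A r *v u))" by (simp add: power2_eq_square algebra_simps)
    then show ?thesis using False by simp
  qed (use C0 in simp)
  obtain Cs where Cs: "\<forall>t\<in>{0..tf}.
          norm (rs t) \<le> Cs \<and> norm (ps t) \<le> Cs \<and> norm (F (rs t) - dQdr A b (rs t) (xs t)) \<le> Cs \<and>
          (\<forall>eps>0. norm (re eps t) \<le> Cs \<and> norm (pe eps t) \<le> Cs \<and>
                   norm (F (re eps t) - dQdr A b (re eps t) (xe eps t)) \<le> Cs \<and>
                   norm (xe eps t) \<le> Cs \<and> sqrt eps * norm (xde eps t) \<le> Cs)"
    using sol_bdd by blast
  obtain B where B: "\<forall>eps>0. norm (rs 0) \<le> B \<and> norm (ps 0) \<le> B \<and>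
                      norm (re eps 0) \<le> B \<and> norm (pe eps 0) \<le> B \<and>
                      norm (xe eps 0) \<le> B \<and> norm (xde eps 0) \<le> B"
    using init_bdd by blast
  define R where "R = max (max Cs B) 1"
  have R: "R > 0" "Cs \<le> R" "B \<le> R" by (auto simp: R_def)
  obtain MA0 where MA0: "\<forall>y\<in>cball 0 R. norm (A y) \<le> MA0" using bdd_cball[OF cont_of_deriv[OF dA]] by blast
  obtain MA1 where MA1: "\<forall>y\<in>cball 0 R. norm (A1 y) \<le> MA1" using bdd_cball[OF cont_of_deriv[OF dA1]] by blast
  obtain MA2 where MA2: "\<forall>y\<in>cball 0 R. norm (A2 y) \<le> MA2" using bdd_cball[OF cont_of_deriv[OF dA2]] by blast
  obtain MA3 where MA3: "\<forall>y\<in>cball 0 R. norm (A3 y) \<le> MA3" using bdd_cball[OF A3c] by blast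
  obtain Mb0 where Mb0: "\<forall>y\<in>cball 0 R. norm (b y) \<le> Mb0" using bdd_cball[OF cont_of_deriv[OF db]] by blast
  obtain Mb1 where Mb1: "\<forall>y\<in>cball 0 R. norm (b1 y) \<le> Mb1" using bdd_cball[OF cont_of_deriv[OF db1]] by blast
  obtain Mb2 where Mb2: "\<forall>y\<in>cball 0 R. norm (b2 y) \<le> Mb2" using bdd_cball[OF cont_of_deriv[OF db2]] by blast
  obtain Mb3 where Mb3: "\<forall>y\<in>cball 0 R. norm (b3 y) \<le> Mb3" using bdd_cball[OF b3c] by blast
  obtain MF1 where MF1: "\<forall>y\<in>cball 0 R. norm (F1 y) \<le> MF1" using bdd_cball[OF cont_of_deriv[OF dF1]] by blast
  interpret B: base F A b A1 A2 A3 b1 b2 b3 F1 C0 R tf MA0 MA1 MA2 MA3 Mb0 Mb1 Mb2 Mb3 MF1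
  proof
    show "\<And>r. transpose (A r) = A r" using A_spd by blast
  qed (use dA dA1 dA2 db db1 db2 dF coer coer2 C0 R tf_pos MA0 MA1 MA2 MA3 Mb0 Mb1 Mb2 Mb3 MF1 in auto)
  have exs: "A (rs t) *v xs t = b (rs t)" if "t \<in> {0..tf}" for t
    using exact that unfolding exact_sol_def by auto
  have xs_x: "xs t = B.xstar (rs t)" if "t \<in> {0..tf}" for t
    unfolding B.xstar_def by (rule B.solve_unique[OF exs[OF that]])
  have t0: "0 \<in> {0..tf}" using tf_pos by simp
  have main: "norm (re eps t - rs t) \<le> sqrt B.KV * eps \<and> norm (pe eps t - ps t) \<le> (sqrt B.KV + B.Kg) * eps \<and>
       norm (xe eps t - xs t) \<le> B.Ke * sqrt eps + B.Lx * (sqrt B.KV * eps) \<and>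
       (xde eps 0 = matrix_inv (A (rs 0)) *v (b1 (rs 0) (ps 0) - A1 (rs 0) (ps 0) *v B.xstar (rs 0)) \<longrightarrow>
          norm (xe eps t - xs t) \<le> B.Ke2 * eps + B.Lx * (sqrt B.KV * eps))"
    if eps: "0 < eps" "eps \<le> 1" and t: "t \<in> {0..tf}" for eps t
  proof -
    have X: "xlmd_sol F A b tf eps (re eps) (pe eps) (xe eps) (xde eps)" using xlmd eps by blast
    have dv: "(xde eps has_vector_derivative ((1/eps) *\<^sub>R (b (re eps s) - A (re eps s) *v xe eps s))) (at s within {0..tf})"
      if s: "s \<in> {0..tf}" for s
    proof -
      obtain xdd where h1: "(xde eps has_vector_derivative xdd) (at s within {0..tf})"
        and h2: "eps *\<^sub>R xdd = b (re eps s) - A (re eps s) *v xe eps s"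
        using X s unfolding xlmd_sol_def by blast
      have "(1/eps) *\<^sub>R (eps *\<^sub>R xdd) = xdd" using eps by simp
      then have "xdd = (1/eps) *\<^sub>R (b (re eps s) - A (re eps s) *v xe eps s)" using h2 by simp
      then show ?thesis using h1 by simp
    qed
    have ie: "re eps 0 = rs 0" "pe eps 0 = ps 0" using init_eq eps by auto
    interpret X: xl F A b A1 A2 A3 b1 b2 b3 F1 C0 R tf MA0 MA1 MA2 MA3 Mb0 Mb1 Mb2 Mb3 MF1
      eps "re eps" "pe eps" rs ps "xe eps" "xde eps" xs
    proof (rule xl.intro[OF B.base_axioms], rule xl_axioms.intro)
      show "0 < eps" "eps \<le> 1" by (rule eps)+
      show "\<And>t. t \<in> {0..tf} \<Longrightarrow> (re eps has_vector_derivative pe eps t) (at t within {0..tf})"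
        using X unfolding xlmd_sol_def by blast
      show "\<And>t. t \<in> {0..tf} \<Longrightarrow> (pe eps has_vector_derivative (F (re eps t) - dQdr A b (re eps t) (xe eps t))) (at t within {0..tf})"
        using X unfolding xlmd_sol_def by blast
      show "\<And>t. t \<in> {0..tf} \<Longrightarrow> (xe eps has_vector_derivative xde eps t) (at t within {0..tf})"
        using X unfolding xlmd_sol_def by blast
      show "\<And>t. t \<in> {0..tf} \<Longrightarrow> (xde eps has_vector_derivative ((1/eps) *\<^sub>R (b (re eps t) - A (re eps t) *v xe eps t))) (at t within {0..tf})"
        by (rule dv)
      show "\<And>t. t \<in> {0..tf} \<Longrightarrow> norm (re eps t) \<le> R \<and> norm (pe eps t) \<le> R \<and> norm (F (re eps t) - dQdr A b (re eps t) (xe eps t)) \<le> R \<and> norm (xe eps t) \<le> R"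
        using Cs eps R by force
      show "A (re eps 0) *v xe eps 0 = b (re eps 0)"
        using compat eps ie B.inv_eq by auto
      show "norm (xde eps 0) \<le> R" using B eps R by force
      show "re eps 0 = rs 0" "pe eps 0 = ps 0" by (rule ie)+
      show "\<And>t. t \<in> {0..tf} \<Longrightarrow> (rs has_vector_derivative ps t) (at t within {0..tf})"
        using exact unfolding exact_sol_def by blast
      show "\<And>t. t \<in> {0..tf} \<Longrightarrow> (ps has_vector_derivative (F (rs t) - dQdr A b (rs t) (xs t))) (at t within {0..tf})"
        using exact unfolding exact_sol_def by blast
      show "\<And>t. t \<in> {0..tf} \<Longrightarrow> A (rs t) *v xs t = b (rs t)" by (rule exs)
      show "\<And>t. t \<in> {0..tf} \<Longrightarrow> norm (rs t) \<le> R \<and> norm (ps t) \<le> R" using Cs R by force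
    qed
    have y10: "X.y1 0 = matrix_inv (A (rs 0)) *v (b1 (rs 0) (ps 0) - A1 (rs 0) (ps 0) *v B.xstar (rs 0))"
      unfolding X.y1_def X.Ab_def X.b1t_def X.A1t_def X.y_xstar ie ..
    show ?thesis using X.r_err[OF t] X.p_err[OF t] X.x_err[OF t] X.x_err2[OF t] y10 by auto
  qed
  have nn: "sqrt B.KV \<ge> 0" "B.Kg \<ge> 0" "B.Ke \<ge> 0" "B.Lx \<ge> 0" "B.Y0 \<ge> 0" "B.Ke2 \<ge> 0"
    using B.consts_nonneg B.consts_nonneg2 B.consts_nonneg3 by auto
  have rsb: "norm (rs t) \<le> R" "norm (ps t) \<le> R" if "t \<in> {0..tf}" for t using Cs R that by force+
  have reb: "norm (re eps t) \<le> R" "norm (pe eps t) \<le> R" "norm (xe eps t) \<le> R" if "t \<in> {0..tf}" "eps > 0" for t eps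
    using Cs R that by force+
  have xsb: "norm (xs t) \<le> B.Y0" if "t \<in> {0..tf}" for t using xs_x[OF that] B.xstar_bnd rsb[OF that] by simp
  have big_r: "norm (re eps t - rs t) \<le> 2 * R" "norm (pe eps t - ps t) \<le> 2 * R" "norm (xe eps t - xs t) \<le> R + B.Y0"
    if "t \<in> {0..tf}" "eps > 0" for t eps
    using reb[OF that] rsb[OF that(1)] xsb[OF that(1)] norm_triangle_ineq4
    by (smt (verit))+
  define C1 where "C1 = sqrt B.KV + B.Kg + B.Ke + B.Lx * sqrt B.KV + 2 * R + B.Y0 + 1"
  define C2 where "C2 = sqrt B.KV + B.Kg + 2 * R + 1"
  define C3 where "C3 = B.Ke2 + B.Lx * sqrt B.KV + R + B.Y0 + 1"
  have C1p: "C1 > 0" and C2p: "C2 > 0" and C3p: "C3 > 0"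
  proof -
    have "B.Lx * sqrt B.KV \<ge> 0" using nn by simp
    then show "C1 > 0" "C2 > 0" "C3 > 0" unfolding C1_def C2_def C3_def using nn R by linarith+
  qed
  have part1: "norm (re eps t - rs t) \<le> C1 * sqrt eps \<and> norm (pe eps t - ps t) \<le> C1 * sqrt eps \<and>
      norm (xe eps t - xs t) \<le> C1 * sqrt eps" if t: "t \<in> {0..tf}" and e: "eps > 0" for eps t
  proof (cases "eps \<le> 1")
    case True
    note m = main[OF e True t]
    have es: "eps \<le> sqrt eps" by (rule eps_le_sqrt[OF e True])
    have s0: "sqrt eps \<ge> 0" using e by simp
    have a: "sqrt B.KV * eps \<le> C1 * sqrt eps"
    proof -
      have "sqrt B.KV * eps \<le> sqrt B.KV * sqrt eps" using es nn by (intro mult_left_mono) auto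
      also have "\<dots> \<le> C1 * sqrt eps" using nn R s0 by (intro mult_right_mono) (auto simp: C1_def)
      finally show ?thesis .
    qed
    have b: "(sqrt B.KV + B.Kg) * eps \<le> C1 * sqrt eps"
    proof -
      have "(sqrt B.KV + B.Kg) * eps \<le> (sqrt B.KV + B.Kg) * sqrt eps" using es nn by (intro mult_left_mono) auto
      also have "\<dots> \<le> C1 * sqrt eps" using nn R s0 by (intro mult_right_mono) (auto simp: C1_def)
      finally show ?thesis .
    qed
    have c: "B.Ke * sqrt eps + B.Lx * (sqrt B.KV * eps) \<le> C1 * sqrt eps"
    proof -
      have "B.Lx * (sqrt B.KV * eps) \<le> B.Lx * (sqrt B.KV * sqrt eps)" using es nn by (intro mult_left_mono) auto
      then have "B.Ke * sqrt eps + B.Lx * (sqrt B.KV * eps) \<le> (B.Ke + B.Lx * sqrt B.KV) * sqrt eps"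
        by (simp add: algebra_simps)
      also have "\<dots> \<le> C1 * sqrt eps" using nn R s0 by (intro mult_right_mono) (auto simp: C1_def)
      finally show ?thesis .
    qed
    show ?thesis using m a b c by linarith
  next
    case False
    then have s1: "sqrt eps \<ge> 1" by simp
    have k: "K \<le> C1 * sqrt eps" if "K \<le> C1" "K \<ge> 0" for K
    proof -
      have "K * 1 \<le> C1 * sqrt eps" using that s1 C1p by (intro mult_mono) auto
      then show ?thesis by simp
    qed
    have "2 * R \<le> C1" "R + B.Y0 \<le> C1" using nn R by (auto simp: C1_def)
    then show ?thesis using big_r[OF t e] k[of "2 * R"] k[of "R + B.Y0"] nn R by force
  qed
  have part2: "norm (re eps t - rs t) \<le> C2 * eps \<and> norm (pe eps t - ps t) \<le> C2 * eps"
    if t: "t \<in> {0..tf}" and e: "eps > 0" for eps t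
  proof (cases "eps \<le> 1")
    case True
    note m = main[OF e True t]
    have "sqrt B.KV * eps \<le> C2 * eps" "(sqrt B.KV + B.Kg) * eps \<le> C2 * eps"
      using nn R e by (auto simp: C2_def intro!: mult_right_mono)
    then show ?thesis using m by linarith
  next
    case False
    have "2 * R * 1 \<le> C2 * eps" using False nn R by (intro mult_mono) (auto simp: C2_def)
    then show ?thesis using big_r[OF t e] by simp
  qed
  have part3: "norm (xe eps t - xs t) \<le> C3 * eps"
    if t: "t \<in> {0..tf}" and e: "eps > 0"
      and h: "xde eps 0 = - (matrix_inv (A (rs 0)) ** (\<Sum>k\<in>UNIV. (ps 0 $ k) *\<^sub>R partial A (rs 0) k)
                     ** matrix_inv (A (rs 0))) *v b (rs 0)
                 + matrix_inv (A (rs 0)) *v (\<Sum>k\<in>UNIV. (ps 0 $ k) *\<^sub>R partial b (rs 0) k)" for eps t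
  proof (cases "eps \<le> 1")
    case True
    have h': "xde eps 0 = matrix_inv (A (rs 0)) *v (b1 (rs 0) (ps 0) - A1 (rs 0) (ps 0) *v B.xstar (rs 0))"
      using h B.formula_eq by simp
    have m: "norm (xe eps t - xs t) \<le> B.Ke2 * eps + B.Lx * (sqrt B.KV * eps)"
      using main[OF e True t] h' by blast
    have "B.Ke2 * eps + B.Lx * (sqrt B.KV * eps) = (B.Ke2 + B.Lx * sqrt B.KV) * eps" by (simp add: algebra_simps)
    also have "\<dots> \<le> C3 * eps" using nn R e by (intro mult_right_mono) (auto simp: C3_def)
    finally show ?thesis using m by linarith
  next
    case False
    have "(R + B.Y0) * 1 \<le> C3 * eps" using False nn R by (intro mult_mono) (auto simp: C3_def)
    then show ?thesis using big_r[OF t e] by simp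
  qed
  show ?thesis
  proof (intro conjI impI)
    show "\<exists>C>0. \<forall>eps>0. \<forall>t\<in>{0..tf}. norm (re eps t - rs t) \<le> C * sqrt eps \<and>
             norm (pe eps t - ps t) \<le> C * sqrt eps \<and> norm (xe eps t - xs t) \<le> C * sqrt eps"
      using part1 C1p by blast
    show "\<exists>C>0. \<forall>eps>0. \<forall>t\<in>{0..tf}. norm (re eps t - rs t) \<le> C * eps \<and> norm (pe eps t - ps t) \<le> C * eps"
      using part2 C2p by blast
    assume "\<forall>eps>0. xde eps 0 =
                 - (matrix_inv (A (rs 0)) ** (\<Sum>k\<in>UNIV. (ps 0 $ k) *\<^sub>R partial A (rs 0) k)
                     ** matrix_inv (A (rs 0))) *v b (rs 0)
                 + matrix_inv (A (rs 0)) *v (\<Sum>k\<in>UNIV. (ps 0 $ k) *\<^sub>R partial b (rs 0) k)"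
    then show "\<exists>C>0. \<forall>eps>0. \<forall>t\<in>{0..tf}. norm (xe eps t - xs t) \<le> C * eps"
      using part3 C3p by blast
  qed
qed


end
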